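(* $[\mathbf{Txt}\mathbf{Sd}\mathbf{Ex}] \setminus [\mathcal{R}\mathbf{Txt}\mathbf{Sd}\mathbf{Ex}] \neq \emptyset$; that is, there is a class of languages that can be $\mathbf{Txt}\mathbf{Sd}\mathbf{Ex}$-learned by some (possibly partial) computable learner but by no total computable learner.
   Context: Fix an acceptable numbering $(\varphi_e)$ of partial computable functions, $W_e=\mathrm{dom}(\varphi_e)$. A text is a total function $T:\mathbb N\to\mathbb N\cup\{\#\}$, $\mathrm{content}(T)=\mathrm{range}(T)\setminus\{\#\}$, $T[n]=(T(0),\dots,T(n-1))$; $\mathbf{Txt}(L)$ is the set of texts with content $L$. Learners are partial computable functions; $\mathbf{Sd}(h,T)(i)=h(\mathrm{content}(T[i]))$. For total $p$ and text $T$: $\mathbf{Ex}(p,T)$ iff $\exists n_0\,\forall n\ge n_0: p(n)=p(n_0)\wedge W_{p(n_0)}=\mathrm{content}(T)$. $h$ $\mathbf{Txt}\mathbf{Sd}\mathbf{Ex}$-learns $L$ iff for every $T\in\mathbf{Txt}(L)$, $\mathbf{Sd}(h,T)$ is total and $\mathbf{Ex}(\mathbf{Sd}(h,T),T)$. $[\mathbf{Txt}\mathbf{Sd}\mathbf{Ex}]$ is the set of classes learnable by a single learner; $[\mathcal R\mathbf{Txt}\mathbf{Sd}\mathbf{Ex}]$ is the same with the learner required to be a total computable function ($\mathcal R$ = total computable functions). *)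

theory Defs
  imports Main "HOL-Library.Nat_Bijection"
begin

text \<open>Partial recursive function terms (untyped, lenient arity).\<close>
datatype recf =
    Z
  | S
  | Id nat
  | Cn recf "recf list"
  | Pr recf recf
  | Mn recf

inductive eval :: "recf \<Rightarrow> nat list \<Rightarrow> nat \<Rightarrow> bool" where
  eval_Z: "eval Z xs 0"
| eval_S: "eval S (x # xs) (Suc x)"
| eval_Id: "i < length xs \<Longrightarrow> eval (Id i) xs (xs ! i)"
| eval_Cn: "length ys = length gs \<Longrightarrow> (\<forall>i < length gs. eval (gs ! i) xs (ys ! i))
            \<Longrightarrow> eval f ys y \<Longrightarrow> eval (Cn f gs) xs y"
| eval_Pr0: "eval f xs y \<Longrightarrow> eval (Pr f g) (0 # xs) y"
| eval_PrS: "eval (Pr f g) (n # xs) y \<Longrightarrow> eval g (n # y # xs) z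
            \<Longrightarrow> eval (Pr f g) (Suc n # xs) z"
| eval_Mn: "eval f (n # xs) 0 \<Longrightarrow> (\<forall>m < n. \<exists>v. eval f (m # xs) (Suc v))
            \<Longrightarrow> eval (Mn f) xs n"

fun code :: "recf \<Rightarrow> nat" where
  "code Z = prod_encode (0, 0)"
| "code S = prod_encode (1, 0)"
| "code (Id i) = prod_encode (2, i)"
| "code (Cn f gs) = prod_encode (3, prod_encode (code f, list_encode (map code gs)))"
| "code (Pr f g) = prod_encode (4, prod_encode (code f, code g))"
| "code (Mn f) = prod_encode (5, code f)"

definition partial_computable :: "(nat \<Rightarrow> nat option) \<Rightarrow> bool" where
  "partial_computable g \<longleftrightarrow> (\<exists>f. \<forall>x y. g x = Some y \<longleftrightarrow> eval f [x] y)"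

definition total_computable :: "(nat \<Rightarrow> nat option) \<Rightarrow> bool" where
  "total_computable g \<longleftrightarrow> partial_computable g \<and> (\<forall>x. g x \<noteq> None)"

definition phi :: "nat \<Rightarrow> nat \<Rightarrow> nat option" where
  "phi e x = (if \<exists>y f. code f = e \<and> eval f [x] y
              then Some (THE y. \<exists>f. code f = e \<and> eval f [x] y) else None)"

definition W :: "nat \<Rightarrow> nat set" where
  "W e = {x. phi e x \<noteq> None}"

text \<open>A text is a total function nat => nat option; None plays the role of the pause symbol.\<close>
type_synonym lang_text = "nat \<Rightarrow> nat option"

definition content :: "lang_text \<Rightarrow> nat set" where
  "content T = {x. \<exists>n. T n = Some x}"

text \<open>content (T[n]) for the initial segment T[n] = (T 0, ..., T (n-1)).\<close>
definition content_prefix :: "lang_text \<Rightarrow> nat \<Rightarrow> nat set" where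
  "content_prefix T n = {x. \<exists>m < n. T m = Some x}"

text \<open>Canonical index of a finite set, used to feed finite sets to learners.\<close>
definition canon :: "nat set \<Rightarrow> nat" where
  "canon D = (\<Sum>x\<in>D. 2 ^ x)"

definition Sd :: "(nat \<Rightarrow> nat option) \<Rightarrow> lang_text \<Rightarrow> nat \<Rightarrow> nat option" where
  "Sd h T i = h (canon (content_prefix T i))"

definition Ex_conv :: "(nat \<Rightarrow> nat) \<Rightarrow> lang_text \<Rightarrow> bool" where
  "Ex_conv p T \<longleftrightarrow> (\<exists>n0. \<forall>n \<ge> n0. p n = p n0 \<and> W (p n0) = content T)"

definition TxtSdEx_learns :: "(nat \<Rightarrow> nat option) \<Rightarrow> nat set \<Rightarrow> bool" where
  "TxtSdEx_learns h L \<longleftrightarrow>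
     (\<forall>T. content T = L \<longrightarrow> (\<forall>i. Sd h T i \<noteq> None) \<and> Ex_conv (\<lambda>i. the (Sd h T i)) T)"

definition TxtSdEx :: "nat set set \<Rightarrow> bool" where
  "TxtSdEx \<L> \<longleftrightarrow> (\<exists>h. partial_computable h \<and> (\<forall>L\<in>\<L>. TxtSdEx_learns h L))"

definition R_TxtSdEx :: "nat set set \<Rightarrow> bool" where
  "R_TxtSdEx \<L> \<longleftrightarrow> (\<exists>h. total_computable h \<and> (\<forall>L\<in>\<L>. TxtSdEx_learns h L))"

end

theory Submission
  imports Defs
begin

inductive_cases evZ_E: "eval Z xs y"
inductive_cases evS_E: "eval S xs y"
inductive_cases evId_E: "eval (Id i) xs y"
inductive_cases evCn_E: "eval (Cn f gs) xs y"
inductive_cases evPr_E: "eval (Pr f g) xs y"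
inductive_cases evMn_E: "eval (Mn f) xs y"

lemma evPr0_inv: "eval (Pr f g) (0 # xs) y \<Longrightarrow> eval f xs y"
  by (erule evPr_E) auto

lemma evPrS_inv: "eval (Pr f g) (Suc n # xs) y \<Longrightarrow> \<exists>r. eval (Pr f g) (n # xs) r \<and> eval g (n # r # xs) y"
  by (erule evPr_E) auto

lemma eval_det: "eval f xs y \<Longrightarrow> eval f xs z \<Longrightarrow> y = z"
proof (induction arbitrary: z rule: eval.induct)
  case (eval_Z xs)
  then show ?case by (elim evZ_E) simp
next
  case (eval_S x xs)
  then show ?case by (elim evS_E) simp
next
  case (eval_Id i xs)
  then show ?case by (elim evId_E) simp
next
  case (eval_Cn ys gs xs f y)
  from eval_Cn.prems obtain ys' where l: "length ys' = length gs"
    and a: "\<forall>i<length gs. eval (gs ! i) xs (ys' ! i)" and b: "eval f ys' z"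
    using evCn_E[OF eval_Cn.prems] by metis
  have "ys = ys'"
  proof (rule nth_equalityI)
    show "length ys = length ys'" using l eval_Cn.hyps(1) by simp
    fix i assume "i < length ys"
    then have i: "i < length gs" using eval_Cn.hyps(1) by simp
    have h: "\<forall>z. eval (gs ! i) xs z \<longrightarrow> ys ! i = z"
      using eval_Cn.IH i by simp
    have "eval (gs ! i) xs (ys' ! i)" using a i by simp
    then show "ys ! i = ys' ! i" using h by simp
  qed
  then show ?case using eval_Cn.IH(2)[OF b[folded \<open>ys = ys'\<close>]] by simp
next
  case (eval_Pr0 f xs y g)
  from evPr0_inv[OF eval_Pr0.prems] show ?case
    using eval_Pr0.IH by simp
next
  case (eval_PrS f g n xs y z')
  from evPrS_inv[OF eval_PrS.prems] obtain y' where "eval (Pr f g) (n # xs) y'" "eval g (n # y' # xs) z"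
    by blast
  then show ?case using eval_PrS.IH by simp
next
  case (eval_Mn f n xs)
  from eval_Mn.prems obtain n' where 1: "eval f (n' # xs) 0" and
     2: "\<forall>m<n'. \<exists>v. eval f (m # xs) (Suc v)" and 3: "z = n'"
    using evMn_E[OF eval_Mn.prems] by metis
  show ?case
  proof (cases n n' rule: linorder_cases)
    case less
    then obtain v where "eval f (n # xs) (Suc v)" using 2 by blast
    then have "0 = Suc v" using eval_Mn.IH(1) by blast
    then show ?thesis by simp
  next
    case equal then show ?thesis using 3 by simp
  next
    case greater
    have "\<exists>v. eval f (n' # xs) (Suc v) \<and> (\<forall>z. eval f (n' # xs) z \<longrightarrow> Suc v = z)"
      using eval_Mn.IH(2) greater by simp
    then obtain v' where "\<forall>z. eval f (n' # xs) z \<longrightarrow> Suc v' = z"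
      by blast
    then show ?thesis using 1 by auto
  qed
qed

lemma code_inj: "code f = code g \<Longrightarrow> f = g"
proof (induction f arbitrary: g)
  case Z then show ?case by (cases g) auto
next
  case S then show ?case by (cases g) auto
next
  case (Id x) then show ?case by (cases g) auto
next
  case (Cn f gs)
  then show ?case
  proof (cases g)
    case (Cn f' gs')
    with Cn.prems have 1: "code f = code f'" and 2: "map code gs = map code gs'"
      by (auto simp: list_encode_eq)
    have "f = f'" using Cn.IH(1) 1 by blast
    moreover have "gs = gs'"
    proof (rule nth_equalityI)
      show "length gs = length gs'" using 2 by (metis length_map)
      fix i assume i: "i < length gs"
      then have "code (gs ! i) = code (gs' ! i)" using 2
        by (metis \<open>length gs = length gs'\<close> nth_map)
      then show "gs ! i = gs' ! i" using Cn.IH(2) i by (meson nth_mem)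
    qed
    ultimately show ?thesis using Cn by simp
  qed auto
next
  case (Pr f1 f2) then show ?case by (cases g) auto
next
  case (Mn f) then show ?case by (cases g) auto
qed

lemma phi_code: "phi (code f) x = (if \<exists>y. eval f [x] y then Some (THE y. eval f [x] y) else None)"
proof -
  have e: "(\<exists>g. code g = code f \<and> eval g [x] y) \<longleftrightarrow> eval f [x] y" for y
    using code_inj by blast
  show ?thesis unfolding phi_def e by simp
qed

lemma phi_code_Some: "eval f [x] y \<Longrightarrow> phi (code f) x = Some y"
  unfolding phi_code using eval_det by (auto intro: the_equality)

lemma W_code: "W (code f) = {x. \<exists>y. eval f [x] y}"
  unfolding W_def phi_code by auto

section \<open>Total computable functions of fixed arity\<close>

definition rt :: "nat \<Rightarrow> (nat list \<Rightarrow> nat) \<Rightarrow> bool" where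
  "rt k F \<longleftrightarrow> (\<exists>f. \<forall>xs. length xs = k \<longrightarrow> eval f xs (F xs))"

primrec num :: "nat \<Rightarrow> recf" where
  "num 0 = Z"
| "num (Suc n) = Cn S [num n]"

lemma eval_num: "eval (num n) xs n"
proof (induction n)
  case 0 then show ?case by (simp add: eval_Z)
next
  case (Suc n)
  have "eval (Cn S [num n]) xs (Suc n)"
    by (rule eval_Cn[where ys="[n]"]) (use Suc in \<open>auto intro: eval_S\<close>)
  then show ?case by simp
qed

lemma rt_const: "rt k (\<lambda>xs. n)"
  unfolding rt_def using eval_num by blast

lemma rt_proj: "i < k \<Longrightarrow> rt k (\<lambda>xs. xs ! i)"
  unfolding rt_def by (auto intro!: exI[of _ "Id i"] eval_Id)

lemma rt_cong: "rt k F \<Longrightarrow> (\<And>xs. length xs = k \<Longrightarrow> F xs = G xs) \<Longrightarrow> rt k G"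
  unfolding rt_def by metis

lemma choice_list:
  "\<forall>H\<in>set Hs. \<exists>h. Q H h \<Longrightarrow> \<exists>hs. length hs = length Hs \<and> (\<forall>i<length Hs. Q (Hs ! i) (hs ! i))"
proof (induction Hs)
  case Nil then show ?case by simp
next
  case (Cons H Hs)
  then obtain hs where 1: "length hs = length Hs" "\<forall>i<length Hs. Q (Hs ! i) (hs ! i)" by auto
  obtain h where "Q H h" using Cons.prems by auto
  then show ?case using 1
    by (intro exI[of _ "h # hs"]) (auto simp: nth_Cons split: nat.split)
qed

lemma rt_comp:
  assumes "rt m G" "length Hs = m" "\<forall>H\<in>set Hs. rt k H"
  shows "rt k (\<lambda>xs. G (map (\<lambda>H. H xs) Hs))"
proof -
  obtain g where g: "\<forall>ys. length ys = m \<longrightarrow> eval g ys (G ys)" using assms(1) rt_def by auto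
  have "\<forall>H\<in>set Hs. \<exists>h. \<forall>xs. length xs = k \<longrightarrow> eval h xs (H xs)" using assms(3) rt_def by auto
  then obtain hs where hs: "length hs = length Hs"
    "\<forall>i<length Hs. \<forall>xs. length xs = k \<longrightarrow> eval (hs ! i) xs ((Hs ! i) xs)"
    using choice_list[where Q="\<lambda>H h. \<forall>xs. length xs = k \<longrightarrow> eval h xs (H xs)"] by blast
  show ?thesis unfolding rt_def
  proof (intro exI allI impI)
    fix xs :: "nat list" assume l: "length xs = k"
    show "eval (Cn g hs) xs (G (map (\<lambda>H. H xs) Hs))"
      by (rule eval_Cn[where ys="map (\<lambda>H. H xs) Hs"]) (use hs l g assms(2) in auto)
  qed
qed

lemma eval_Pr_rec:
  assumes b: "eval b xs B" and s: "\<And>i r. eval s (i # r # xs) (Sf i r)"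
  shows "eval (Pr b s) (n # xs) (rec_nat B Sf n)"
proof (induction n)
  case 0 then show ?case using b by (simp add: eval_Pr0)
next
  case (Suc n) then show ?case using s by (simp add: eval_PrS)
qed

lemma rt_prim:
  assumes "rt k B" "rt (Suc (Suc k)) Sf"
  shows "rt (Suc k) (\<lambda>xs. rec_nat (B (tl xs)) (\<lambda>i r. Sf (i # r # tl xs)) (xs ! 0))"
proof -
  obtain b where b: "\<forall>ys. length ys = k \<longrightarrow> eval b ys (B ys)" using assms(1) rt_def by auto
  obtain s where s: "\<forall>ys. length ys = Suc (Suc k) \<longrightarrow> eval s ys (Sf ys)" using assms(2) rt_def by auto
  show ?thesis unfolding rt_def
  proof (intro exI allI impI)
    fix xs :: "nat list" assume l: "length xs = Suc k"
    then obtain n xs' where xs: "xs = n # xs'" "length xs' = k" by (cases xs) auto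
    show "eval (Pr b s) xs (rec_nat (B (tl xs)) (\<lambda>i r. Sf (i # r # tl xs)) (xs ! 0))"
      unfolding xs using b s xs(2) by (auto intro!: eval_Pr_rec)
  qed
qed

lemma rt_app1:
  assumes "rt 1 (\<lambda>ys. F (ys ! 0))" "rt k A"
  shows "rt k (\<lambda>xs. F (A xs))"
  using rt_comp[OF assms(1), of "[A]" k] assms(2) by simp

lemma rt_app2:
  assumes "rt 2 (\<lambda>ys. F (ys ! 0) (ys ! 1))" "rt k A" "rt k B"
  shows "rt k (\<lambda>xs. F (A xs) (B xs))"
  using rt_comp[OF assms(1), of "[A, B]" k] assms(2,3) by simp

lemma rt_app3:
  assumes "rt 3 (\<lambda>ys. F (ys ! 0) (ys ! 1) (ys ! 2))" "rt k A" "rt k B" "rt k C"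
  shows "rt k (\<lambda>xs. F (A xs) (B xs) (C xs))"
  using rt_comp[OF assms(1), of "[A, B, C]" k] assms(2-4) by simp

lemma rt_rec:
  assumes "rt k N" "rt k B" "rt (Suc (Suc k)) (\<lambda>ys. Sf (ys ! 0) (ys ! 1) (tl (tl ys)))"
  shows "rt k (\<lambda>xs. rec_nat (B xs) (\<lambda>i r. Sf i r xs) (N xs))"
proof -
  have p: "rt (Suc k) (\<lambda>xs. rec_nat (B (tl xs)) (\<lambda>i r. Sf i r (tl xs)) (xs ! 0))"
    using rt_prim[OF assms(2) assms(3)] by simp
  have c: "rt k (\<lambda>xs. (\<lambda>ys. rec_nat (B (tl ys)) (\<lambda>i r. Sf i r (tl ys)) (ys ! 0))
           (map (\<lambda>H. H xs) (N # map (\<lambda>j xs. xs ! j) [0..<k])))"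
    by (rule rt_comp[OF p]) (auto intro: assms(1) rt_proj)
  have e: "map ((!) xs) [0..<k] = xs" if "length xs = k" for xs :: "nat list"
    using that map_nth[of xs] by (simp add: comp_def)
  show ?thesis by (rule rt_cong[OF c]) (simp add: e comp_def)
qed

lemma rt_suc: "rt k A \<Longrightarrow> rt k (\<lambda>xs. Suc (A xs))"
proof -
  have "rt 1 (\<lambda>ys. Suc (ys ! 0))"
    unfolding rt_def
    by (rule exI[of _ S]) (auto simp: length_Suc_conv intro: eval_S)
  then show "rt k A \<Longrightarrow> rt k (\<lambda>xs. Suc (A xs))" by (rule rt_app1)
qed

lemma rt_proj1: "Suc i < k \<Longrightarrow> rt k (\<lambda>ys. tl ys ! i)"
  by (rule rt_cong[OF rt_proj[of "Suc i" k]]) (auto simp: nth_tl)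
lemma rt_proj2: "Suc (Suc i) < k \<Longrightarrow> rt k (\<lambda>ys. tl (tl ys) ! i)"
  by (rule rt_cong[OF rt_proj[of "Suc (Suc i)" k]]) (auto simp: nth_tl)
lemma rt_proj3: "Suc (Suc (Suc i)) < k \<Longrightarrow> rt k (\<lambda>ys. tl (tl (tl ys)) ! i)"
  by (rule rt_cong[OF rt_proj[of "Suc (Suc (Suc i))" k]]) (auto simp: nth_tl)
lemma rt_proj4: "Suc (Suc (Suc (Suc i))) < k \<Longrightarrow> rt k (\<lambda>ys. tl (tl (tl (tl ys))) ! i)"
  by (rule rt_cong[OF rt_proj[of "Suc (Suc (Suc (Suc i)))" k]]) (auto simp: nth_tl)

definition rtp :: "nat \<Rightarrow> (nat list \<Rightarrow> bool) \<Rightarrow> bool" where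
  "rtp k P \<longleftrightarrow> rt k (\<lambda>xs. if P xs then 1 else 0)"

lemma rt_drop1:
  assumes "rt (Suc k) F"
  shows "rt (Suc (Suc k)) (\<lambda>ys. F (ys ! 0 # tl (tl ys)))"
proof -
  have c: "rt (Suc (Suc k)) (\<lambda>ys. F (map (\<lambda>H. H ys) ((\<lambda>ys. ys ! 0) # map (\<lambda>j ys. ys ! (j + 2)) [0..<k])))"
    by (rule rt_comp[OF assms]) (auto intro: rt_proj)
  have e: "map (\<lambda>x. ys ! Suc (Suc x)) [0..<k] = tl (tl ys)" if "length ys = Suc (Suc k)" for ys :: "nat list"
    using that by (intro nth_equalityI) (auto simp: nth_tl)
  show ?thesis by (rule rt_cong[OF c]) (simp add: e comp_def)
qed

lemma rec_add: "rec_nat b (\<lambda>i r. Suc r) n = n + b"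
  by (induction n) auto
lemma rec_sub: "rec_nat x (\<lambda>i r. r - 1) n = x - n"
  by (induction n) auto
lemma rec_mult: "rec_nat 0 (\<lambda>i r. r + x) n = n * x"
  by (induction n) auto

lemma rt_add2: "rt 2 (\<lambda>ys. ys ! 0 + ys ! 1)"
proof -
  have "rt 2 (\<lambda>ys. rec_nat (ys ! 1) (\<lambda>i r. (\<lambda>a b c. Suc b) i r ys) (ys ! 0))"
    by (rule rt_rec) (auto intro!: rt_proj rt_suc)
  then show ?thesis by (rule rt_cong) (simp add: rec_add)
qed

lemma rt_add: "rt k A \<Longrightarrow> rt k B \<Longrightarrow> rt k (\<lambda>xs. A xs + B xs)"
  by (rule rt_app2[OF rt_add2])

lemma rt_pred1: "rt 1 (\<lambda>ys. ys ! 0 - 1)"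
proof -
  have p: "rt 1 (\<lambda>ys. rec_nat 0 (\<lambda>i r. (\<lambda>a b c. a) i r ys) (ys ! 0))"
    by (rule rt_rec) (auto intro!: rt_proj rt_const)
  show ?thesis
  proof (rule rt_cong[OF p])
    fix xs :: "nat list" show "rec_nat 0 (\<lambda>i r. (\<lambda>a b c. a) i r xs) (xs ! 0) = xs ! 0 - 1"
      by (cases "xs ! 0") auto
  qed
qed

lemma rt_pred: "rt k A \<Longrightarrow> rt k (\<lambda>xs. A xs - 1)"
  by (rule rt_app1[where F="\<lambda>x. x - 1", OF rt_pred1])

lemma rt_sub2: "rt 2 (\<lambda>ys. ys ! 0 - ys ! 1)"
proof -
  have "rt 2 (\<lambda>ys. rec_nat (ys ! 0) (\<lambda>i r. (\<lambda>a b c. b - 1) i r ys) (ys ! 1))"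
    by (rule rt_rec; intro rt_pred rt_proj; simp)
  then show ?thesis by (rule rt_cong) (rule rec_sub)
qed

lemma rt_sub: "rt k A \<Longrightarrow> rt k B \<Longrightarrow> rt k (\<lambda>xs. A xs - B xs)"
  by (rule rt_app2[OF rt_sub2])

lemma rt_mult2: "rt 2 (\<lambda>ys. ys ! 0 * ys ! 1)"
proof -
  have "rt 2 (\<lambda>ys. rec_nat 0 (\<lambda>i r. (\<lambda>a b c. b + c ! 1) i r ys) (ys ! 0))"
    by (rule rt_rec; intro rt_add rt_proj rt_proj2 rt_const; simp)
  then show ?thesis by (rule rt_cong) (simp add: rec_mult)
qed

lemma rt_mult: "rt k A \<Longrightarrow> rt k B \<Longrightarrow> rt k (\<lambda>xs. A xs * B xs)"
  by (rule rt_app2[OF rt_mult2])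

lemma rt_if: "rtp k P \<Longrightarrow> rt k A \<Longrightarrow> rt k B \<Longrightarrow> rt k (\<lambda>xs. if P xs then A xs else B xs)"
  unfolding rtp_def
proof -
  assume p: "rt k (\<lambda>xs. if P xs then 1 else 0)" and a: "rt k A" and b: "rt k B"
  have "rt k (\<lambda>xs. A xs * (if P xs then 1 else 0) + B xs * (1 - (if P xs then 1 else 0)))"
    by (intro rt_add rt_mult rt_sub rt_const a b p)
  then show ?thesis by (rule rt_cong) simp
qed

lemma rtp_eq: "rt k A \<Longrightarrow> rt k B \<Longrightarrow> rtp k (\<lambda>xs. A xs = B xs)"
  unfolding rtp_def
proof -
  assume a: "rt k A" and b: "rt k B"
  have "rt k (\<lambda>xs. 1 - ((A xs - B xs) + (B xs - A xs)))"
    by (intro rt_add rt_sub rt_const a b)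
  then show "rt k (\<lambda>xs. if A xs = B xs then 1 else 0)" by (rule rt_cong) simp
qed

lemma rtp_less: "rt k A \<Longrightarrow> rt k B \<Longrightarrow> rtp k (\<lambda>xs. A xs < B xs)"
  unfolding rtp_def
proof -
  assume a: "rt k A" and b: "rt k B"
  have "rt k (\<lambda>xs. 1 - (1 - (B xs - A xs)))"
    by (intro rt_add rt_sub rt_const a b)
  then show "rt k (\<lambda>xs. if A xs < B xs then 1 else 0)" by (rule rt_cong) simp
qed

lemma rtp_le: "rt k A \<Longrightarrow> rt k B \<Longrightarrow> rtp k (\<lambda>xs. A xs \<le> B xs)"
  unfolding rtp_def
proof -
  assume a: "rt k A" and b: "rt k B"
  have "rt k (\<lambda>xs. 1 - (1 - (1 - (A xs - B xs))))"
    by (intro rt_sub rt_const a b)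
  then show "rt k (\<lambda>xs. if A xs \<le> B xs then 1 else 0)" by (rule rt_cong) simp
qed

lemma rtp_not: "rtp k P \<Longrightarrow> rtp k (\<lambda>xs. \<not> P xs)"
  unfolding rtp_def
proof -
  assume a: "rt k (\<lambda>xs. if P xs then 1 else 0)"
  have "rt k (\<lambda>xs. 1 - (if P xs then 1 else 0))" by (intro rt_sub rt_const a)
  then show "rt k (\<lambda>xs. if \<not> P xs then 1 else 0)" by (rule rt_cong) simp
qed

lemma rtp_and: "rtp k P \<Longrightarrow> rtp k Q \<Longrightarrow> rtp k (\<lambda>xs. P xs \<and> Q xs)"
  unfolding rtp_def
proof -
  assume a: "rt k (\<lambda>xs. if P xs then 1 else 0)" and b: "rt k (\<lambda>xs. if Q xs then 1 else 0)"
  have "rt k (\<lambda>xs. (if P xs then 1 else 0) * (if Q xs then 1 else 0))" by (intro rt_mult a b)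
  then show "rt k (\<lambda>xs. if P xs \<and> Q xs then 1 else 0)" by (rule rt_cong) simp
qed

lemma rtp_or: "rtp k P \<Longrightarrow> rtp k Q \<Longrightarrow> rtp k (\<lambda>xs. P xs \<or> Q xs)"
proof -
  assume "rtp k P" "rtp k Q"
  then have "rtp k (\<lambda>xs. \<not> (\<not> P xs \<and> \<not> Q xs))" by (intro rtp_not rtp_and)
  then show ?thesis by simp
qed

lemma rtp_imp: "rtp k P \<Longrightarrow> rtp k Q \<Longrightarrow> rtp k (\<lambda>xs. P xs \<longrightarrow> Q xs)"
proof -
  assume "rtp k P" "rtp k Q"
  then have "rtp k (\<lambda>xs. \<not> P xs \<or> Q xs)" by (intro rtp_not rtp_or)
  then show ?thesis by simp
qed

lemma rtp_const: "rtp k (\<lambda>xs. b)"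
  unfolding rtp_def by (cases b) (simp_all add: rt_const)

lemma rec_ex: "rec_nat 0 (\<lambda>i r. if r = 1 \<or> P i then 1 else 0) n = (if \<exists>i<n. P i then 1 else (0::nat))"
  by (induction n) (auto simp: less_Suc_eq)

lemma rtp_ex:
  assumes n: "rt k N" and p: "rtp (Suc k) (\<lambda>ys. P (ys ! 0) (tl ys))"
  shows "rtp k (\<lambda>xs. \<exists>i<N xs. P i xs)"
proof -
  have p2: "rtp (Suc (Suc k)) (\<lambda>ys. P (ys ! 0) (tl (tl ys)))"
    using rt_drop1[OF p[unfolded rtp_def]] unfolding rtp_def by simp
  have "rt k (\<lambda>xs. rec_nat 0 (\<lambda>i r. (\<lambda>i r xs. if r = 1 \<or> P i xs then 1 else 0) i r xs) (N xs))"
    by (rule rt_rec[OF n rt_const]) (auto intro!: rt_if rtp_or rtp_eq rt_proj rt_const p2)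
  then show ?thesis unfolding rtp_def by (rule rt_cong) (rule rec_ex)
qed

lemma rtp_all:
  assumes n: "rt k N" and p: "rtp (Suc k) (\<lambda>ys. P (ys ! 0) (tl ys))"
  shows "rtp k (\<lambda>xs. \<forall>i<N xs. P i xs)"
proof -
  have "rtp k (\<lambda>xs. \<not> (\<exists>i<N xs. \<not> P i xs))"
    by (rule rtp_not, rule rtp_ex[OF n], rule rtp_not[OF p])
  then show ?thesis by simp
qed

definition bmin :: "nat \<Rightarrow> (nat \<Rightarrow> bool) \<Rightarrow> nat" where
  "bmin n P = (if \<exists>i<n. P i then (LEAST i. P i) else n)"

lemma rec_bmin: "rec_nat 0 (\<lambda>i r. if r < i then r else if P i then i else Suc i) n = bmin n P"
proof (induction n)
  case 0 then show ?case by (simp add: bmin_def)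
next
  case (Suc n)
  show ?case
  proof (cases "\<exists>i<n. P i")
    case True
    then obtain i where "i < n" "P i" by blast
    then have "(LEAST i. P i) < n" using Least_le[of P i] by linarith
    then show ?thesis using Suc True by (auto simp: bmin_def less_Suc_eq)
  next
    case False
    then have "\<not> n < n" by simp
    show ?thesis
    proof (cases "P n")
      case True
      have "(LEAST i. P i) = n"
      proof (rule Least_equality)
        show "P n" by fact
        show "\<And>y. P y \<Longrightarrow> n \<le> y" using False by (simp add: not_less[symmetric]) blast
      qed
      then show ?thesis using Suc False True by (auto simp: bmin_def less_Suc_eq)
    next
      case F: False
      then show ?thesis using Suc False by (auto simp: bmin_def less_Suc_eq)
    qed
  qed
qed

lemma rt_bmin:
  assumes n: "rt k N" and p: "rtp (Suc k) (\<lambda>ys. P (ys ! 0) (tl ys))"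
  shows "rt k (\<lambda>xs. bmin (N xs) (\<lambda>i. P i xs))"
proof -
  have p2: "rtp (Suc (Suc k)) (\<lambda>ys. P (ys ! 0) (tl (tl ys)))"
    using rt_drop1[OF p[unfolded rtp_def]] unfolding rtp_def by simp
  have "rt k (\<lambda>xs. rec_nat 0 (\<lambda>i r. (\<lambda>i r xs. if r < i then r else if P i xs then i else Suc i) i r xs) (N xs))"
    by (rule rt_rec[OF n rt_const]) (auto intro!: rt_if rtp_less rt_proj rt_suc p2)
  then show ?thesis by (rule rt_cong) (rule rec_bmin)
qed

lemma bmin_le: "bmin n P \<le> n"
  unfolding bmin_def by (auto intro: Least_le order.trans[OF Least_le] simp: less_imp_le)

lemma bmin_eq: "P m \<Longrightarrow> m < n \<Longrightarrow> (\<forall>i<m. \<not> P i) \<Longrightarrow> bmin n P = m"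
  unfolding bmin_def by (auto intro!: Least_equality) (meson not_less)

lemma bmin_P: "bmin n P < n \<Longrightarrow> P (bmin n P)"
  unfolding bmin_def by (auto split: if_splits intro: LeastI)

lemma bmin_none: "\<forall>i<n. \<not> P i \<Longrightarrow> bmin n P = n"
  unfolding bmin_def by auto

lemma bmin_min: "i < bmin n P \<Longrightarrow> \<not> P i"
  unfolding bmin_def by (auto split: if_splits dest: not_less_Least)

lemmas rt_intros = rt_add rt_sub rt_mult rt_if rt_suc rt_const rt_proj rt_proj1 rt_proj2 rt_proj3 rt_proj4
  rtp_eq rtp_less rtp_le rtp_not rtp_and rtp_or rtp_imp rtp_const rtp_ex rtp_all rt_bmin

lemma rt_triangle1: "rt 1 (\<lambda>ys. triangle (ys ! 0))"
proof -
  have "rt 1 (\<lambda>ys. rec_nat 0 (\<lambda>i r. (\<lambda>a b c. b + Suc a) i r ys) (ys ! 0))"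
    by (rule rt_rec; intro rt_add rt_suc rt_proj rt_const; simp)
  moreover have "rec_nat 0 (\<lambda>i r. r + Suc i) n = triangle n" for n
    by (induction n) auto
  ultimately show ?thesis by (rule rt_cong)
qed

lemma rt_triangle: "rt k A \<Longrightarrow> rt k (\<lambda>xs. triangle (A xs))"
  by (rule rt_app1[OF rt_triangle1])

definition pe :: "nat \<Rightarrow> nat \<Rightarrow> nat" where "pe a b = prod_encode (a, b)"
definition pfst :: "nat \<Rightarrow> nat" where "pfst z = fst (prod_decode z)"
definition psnd :: "nat \<Rightarrow> nat" where "psnd z = snd (prod_decode z)"

lemma pfst_pe[simp]: "pfst (pe a b) = a" and psnd_pe[simp]: "psnd (pe a b) = b"
  by (simp_all add: pe_def pfst_def psnd_def)

lemma pe_inj[simp]: "pe a b = pe c d \<longleftrightarrow> a = c \<and> b = d"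
  by (simp add: pe_def)

lemma pe_pfst_psnd[simp]: "pe (pfst z) (psnd z) = z"
  by (simp add: pe_def pfst_def psnd_def)

lemma rt_pe: "rt k A \<Longrightarrow> rt k B \<Longrightarrow> rt k (\<lambda>xs. pe (A xs) (B xs))"
proof -
  assume a: "rt k A" and b: "rt k B"
  have "rt k (\<lambda>xs. triangle (A xs + B xs) + A xs)" by (intro rt_add rt_triangle a b)
  then show ?thesis by (rule rt_cong) (simp add: pe_def prod_encode_def)
qed

lemma triangle_mono: "i \<le> j \<Longrightarrow> triangle i \<le> triangle j"
  by (induction j) (auto simp: le_Suc_eq)

lemma le_triangle: "n \<le> triangle n"
  by (induction n) auto

definition dsq :: "nat \<Rightarrow> nat" where "dsq z = bmin (Suc z) (\<lambda>s. z < triangle (Suc s))"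

lemma dsq_pe: "dsq (pe a b) = a + b"
proof -
  let ?z = "pe a b"
  have z: "?z = triangle (a + b) + a" by (simp add: pe_def prod_encode_def)
  show ?thesis unfolding dsq_def
  proof (rule bmin_eq)
    show "?z < triangle (Suc (a + b))" using z by simp
    show "a + b < Suc ?z" using z le_triangle[of "a+b"] by simp
    show "\<forall>i<a + b. \<not> ?z < triangle (Suc i)"
      using z triangle_mono by (metis Suc_leI add.commute le_add2 not_less order.trans trans_le_add2)
  qed
qed

lemma pfst_eq: "pfst z = z - triangle (dsq z)" and psnd_eq: "psnd z = dsq z - (z - triangle (dsq z))"
proof -
  obtain a b where z: "z = pe a b" by (metis pe_pfst_psnd)
  have t: "z = triangle (a + b) + a" using z by (simp add: pe_def prod_encode_def)
  show "pfst z = z - triangle (dsq z)" using z t dsq_pe by simp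
  show "psnd z = dsq z - (z - triangle (dsq z))" using z t dsq_pe by simp
qed

lemma rt_dsq1: "rt 1 (\<lambda>ys. dsq (ys ! 0))"
  unfolding dsq_def
  by (rule rt_bmin[where P="\<lambda>s xs. xs ! 0 < triangle (Suc s)"]; intro rt_suc rt_proj rtp_less rt_triangle rt_proj1; simp)

lemma rt_dsq: "rt k A \<Longrightarrow> rt k (\<lambda>xs. dsq (A xs))"
  by (rule rt_app1[OF rt_dsq1])

lemma rt_pfst: "rt k A \<Longrightarrow> rt k (\<lambda>xs. pfst (A xs))"
  unfolding pfst_eq by (intro rt_sub rt_triangle rt_dsq)

lemma rt_psnd: "rt k A \<Longrightarrow> rt k (\<lambda>xs. psnd (A xs))"
  unfolding psnd_eq by (intro rt_sub rt_triangle rt_dsq)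

section \<open>Encoded lists\<close>

definition lhd :: "nat \<Rightarrow> nat" where "lhd L = pfst (L - 1)"
definition ltl :: "nat \<Rightarrow> nat" where "ltl L = psnd (L - 1)"
definition lcons :: "nat \<Rightarrow> nat \<Rightarrow> nat" where "lcons x L = Suc (pe x L)"
definition itl :: "nat \<Rightarrow> nat \<Rightarrow> nat" where "itl i L = (ltl ^^ i) L"
definition lnth :: "nat \<Rightarrow> nat \<Rightarrow> nat" where "lnth L i = lhd (itl i L)"
definition llen :: "nat \<Rightarrow> nat" where "llen L = bmin (Suc L) (\<lambda>i. itl i L = 0)"

lemma rt_lhd: "rt k A \<Longrightarrow> rt k (\<lambda>xs. lhd (A xs))"
  unfolding lhd_def by (intro rt_pfst rt_sub rt_const)
lemma rt_ltl: "rt k A \<Longrightarrow> rt k (\<lambda>xs. ltl (A xs))"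
  unfolding ltl_def by (intro rt_psnd rt_sub rt_const)
lemma rt_lcons: "rt k A \<Longrightarrow> rt k B \<Longrightarrow> rt k (\<lambda>xs. lcons (A xs) (B xs))"
  unfolding lcons_def by (intro rt_suc rt_pe)

lemma itl_rec: "itl i L = rec_nat L (\<lambda>_ r. ltl r) i"
  unfolding itl_def by (induction i) auto

lemma rt_itl2: "rt 2 (\<lambda>ys. itl (ys ! 0) (ys ! 1))"
proof -
  have "rt 2 (\<lambda>ys. rec_nat (ys ! 1) (\<lambda>i r. (\<lambda>a b c. ltl b) i r ys) (ys ! 0))"
    by (rule rt_rec; intro rt_ltl rt_proj; simp)
  then show ?thesis by (rule rt_cong) (simp add: itl_rec)
qed

lemma rt_itl: "rt k A \<Longrightarrow> rt k B \<Longrightarrow> rt k (\<lambda>xs. itl (A xs) (B xs))"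
  by (rule rt_app2[OF rt_itl2])

lemma rt_lnth: "rt k A \<Longrightarrow> rt k B \<Longrightarrow> rt k (\<lambda>xs. lnth (A xs) (B xs))"
  unfolding lnth_def by (intro rt_lhd rt_itl)

lemma rt_llen1: "rt 1 (\<lambda>ys. llen (ys ! 0))"
  unfolding llen_def
  by (rule rt_bmin[where P="\<lambda>i xs. itl i (xs ! 0) = 0"]; intro rt_suc rt_proj rtp_eq rt_itl rt_proj1 rt_const; simp)

lemma rt_llen: "rt k A \<Longrightarrow> rt k (\<lambda>xs. llen (A xs))"
  by (rule rt_app1[OF rt_llen1])

lemma list_decode_Suc: "list_decode (Suc n) = pfst n # list_decode (psnd n)"
  by (simp add: pfst_def psnd_def split: prod.split)

lemma lhd_Suc[simp]: "lhd (Suc (prod_encode (a, b))) = a"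
  by (simp add: lhd_def pfst_def)
lemma ltl_Suc[simp]: "ltl (Suc (prod_encode (a, b))) = b"
  by (simp add: ltl_def psnd_def)
lemma lhd_enc[simp]: "lhd (list_encode (x # xs)) = x"
  by simp
lemma ltl_enc[simp]: "ltl (list_encode (x # xs)) = list_encode xs"
  by simp
lemma ltl_0[simp]: "ltl 0 = 0"
  by (simp add: ltl_def psnd_def prod_decode_def prod_decode_aux.simps)
lemma lcons_enc: "lcons x (list_encode xs) = list_encode (x # xs)"
  by (simp add: lcons_def pe_def)

lemma itl_enc: "itl i (list_encode xs) = list_encode (drop i xs)"
proof (induction i arbitrary: xs)
  case 0 then show ?case by (simp add: itl_def)
next
  case (Suc i)
  have "itl (Suc i) (list_encode xs) = itl i (ltl (list_encode xs))"
    unfolding itl_def by (simp add: funpow_Suc_right del: funpow.simps)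
  also have "ltl (list_encode xs) = list_encode (tl xs)" by (cases xs) auto
  finally show ?case using Suc by (simp add: drop_Suc)
qed

lemma lnth_enc: "i < length xs \<Longrightarrow> lnth (list_encode xs) i = xs ! i"
  unfolding lnth_def itl_enc by (simp add: Cons_nth_drop_Suc[symmetric])

lemma length_le_enc: "length xs \<le> list_encode xs"
  by (induction xs) (auto intro: le_trans[OF _ le_prod_encode_2])

lemma list_encode_0: "list_encode xs = 0 \<longleftrightarrow> xs = []"
  by (cases xs) auto

lemma llen_enc: "llen (list_encode xs) = length xs"
  unfolding llen_def
proof (rule bmin_eq)
  show "itl (length xs) (list_encode xs) = 0" by (simp add: itl_enc)
  show "length xs < Suc (list_encode xs)" using length_le_enc[of xs] by simp
  show "\<forall>i<length xs. \<not> itl i (list_encode xs) = 0" by (simp add: itl_enc list_encode_0)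
qed

lemmas rt_intros2 = rt_intros rt_pe rt_pfst rt_psnd rt_lhd rt_ltl rt_lcons rt_itl rt_lnth rt_llen rt_triangle

section \<open>Certificates for evaluations\<close>

definition fc :: "nat \<Rightarrow> nat \<Rightarrow> nat \<Rightarrow> nat" where
  "fc c xsc y = pe c (pe xsc y)"

definition justE :: "nat \<Rightarrow> (nat \<Rightarrow> bool) \<Rightarrow> bool" where
  "justE e H \<longleftrightarrow>
    (let core = pfst e; aux = psnd e; c = pfst core; xsc = pfst (psnd core); y = psnd (psnd core);
         tag = pfst c; r = psnd c in
     (tag = 0 \<and> y = 0) \<or>
     (tag = 1 \<and> xsc \<noteq> 0 \<and> y = Suc (lhd xsc)) \<or>
     (tag = 2 \<and> r < llen xsc \<and> y = lnth xsc r) \<or>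
     (tag = 3 \<and> llen aux = llen (psnd r) \<and> (\<forall>k<llen (psnd r). H (fc (lnth (psnd r) k) xsc (lnth aux k)))
        \<and> H (fc (pfst r) aux y)) \<or>
     (tag = 4 \<and> xsc \<noteq> 0 \<and> lhd xsc = 0 \<and> H (fc (pfst r) (ltl xsc) y)) \<or>
     (tag = 4 \<and> xsc \<noteq> 0 \<and> lhd xsc \<noteq> 0 \<and> H (fc c (lcons (lhd xsc - 1) (ltl xsc)) aux)
        \<and> H (fc (psnd r) (lcons (lhd xsc - 1) (lcons aux (ltl xsc))) y)) \<or>
     (tag = 5 \<and> H (fc r (lcons y xsc) 0) \<and> llen aux = y \<and> (\<forall>m<y. H (fc r (lcons m xsc) (Suc (lnth aux m))))))"

lemma justE_mono: "justE e H \<Longrightarrow> (\<And>F. H F \<Longrightarrow> H' F) \<Longrightarrow> justE e H'"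
  unfolding justE_def Let_def by blast

definition hasN :: "nat \<Rightarrow> nat \<Rightarrow> nat \<Rightarrow> bool" where
  "hasN C i F \<longleftrightarrow> (\<exists>j<i. pfst (lnth C j) = F)"

definition justN :: "nat \<Rightarrow> nat \<Rightarrow> bool" where
  "justN C i \<longleftrightarrow> justE (lnth C i) (hasN C i)"

lemma rt_shift: "rt k A \<Longrightarrow> rt (Suc k) (\<lambda>ys. A (tl ys))"
proof -
  assume a: "rt k A"
  have c: "rt (Suc k) (\<lambda>ys. A (map (\<lambda>H. H ys) (map (\<lambda>j ys. ys ! Suc j) [0..<k])))"
    by (rule rt_comp[OF a]) (auto intro: rt_proj)
  have e: "map (\<lambda>x. ys ! Suc x) [0..<k] = tl ys" if "length ys = Suc k" for ys :: "nat list"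
    using that by (intro nth_equalityI) (auto simp: nth_tl)
  show ?thesis by (rule rt_cong[OF c]) (simp add: e comp_def)
qed

lemma rtp_hasN: "rt k A \<Longrightarrow> rt k B \<Longrightarrow> rt k F \<Longrightarrow> rtp k (\<lambda>xs. hasN (A xs) (B xs) (F xs))"
  unfolding hasN_def
proof -
  assume a: "rt k A" and b: "rt k B" and f: "rt k F"
  show "rtp k (\<lambda>xs. \<exists>j<B xs. pfst (lnth (A xs) j) = F xs)"
    by (rule rtp_ex[OF b]) (intro rtp_eq rt_pfst rt_lnth rt_shift[OF a] rt_shift[OF f] rt_proj; simp)
qed

definition checkN :: "nat \<Rightarrow> nat \<Rightarrow> nat \<Rightarrow> bool" where
  "checkN w e x \<longleftrightarrow> (\<forall>i<llen (pfst w). justN (pfst w) i) \<and>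
      (\<exists>j<llen (pfst w). pfst (lnth (pfst w) j) = fc e (lcons x 0) (psnd w))"

lemma rtp_justN2: "rtp 2 (\<lambda>xs. justN (xs ! 0) (xs ! 1))"
  unfolding justN_def justE_def Let_def fc_def
  by (intro rt_intros2 rtp_hasN; simp)

lemma rtp_justN: "rt k A \<Longrightarrow> rt k B \<Longrightarrow> rtp k (\<lambda>xs. justN (A xs) (B xs))"
  using rt_app2[OF rtp_justN2[unfolded rtp_def], of k A B] unfolding rtp_def by simp

lemma rtp_checkN: "rtp 3 (\<lambda>ys. checkN (ys ! 0) (ys ! 1) (ys ! 2))"
  unfolding checkN_def fc_def
  by (intro rt_intros2 rtp_justN; simp)


lemma pfst_pen[simp]: "pfst (prod_encode (a, b)) = a" and psnd_pen[simp]: "psnd (prod_encode (a, b)) = b"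
  by (simp_all add: pfst_def psnd_def)

lemma lcons_enc'[simp]: "lcons x (list_encode xs) = list_encode (x # xs)"
  by (simp add: lcons_def pe_def)

lemma lhd_enc'[simp]: "lhd (list_encode xs) = (case xs of [] \<Rightarrow> lhd 0 | x # _ \<Rightarrow> x)"
  by (cases xs) auto

lemma sound:
  assumes V: "\<forall>i<llen C. justN C i"
  shows "i < llen C \<Longrightarrow> pfst (lnth C i) = fc (code g) (list_encode xs) y \<Longrightarrow> eval g xs y"
proof (induction i arbitrary: g xs y rule: less_induct)
  case (less i)
  have H: "eval g' xs' y'" if h: "hasN C i (fc (code g') (list_encode xs') y')" for g' xs' y'
  proof -
    obtain j where "j < i" "pfst (lnth C j) = fc (code g') (list_encode xs') y'"
      using h unfolding hasN_def by blast
    then show ?thesis using less.IH less.prems(1) by simp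
  qed
  have J: "justE (lnth C i) (hasN C i)" using V less.prems(1) unfolding justN_def by blast
  define aux where "aux = psnd (lnth C i)"
  have core: "pfst (lnth C i) = fc (code g) (list_encode xs) y" by (rule less.prems(2))
  note J' = J[unfolded justE_def Let_def core fc_def aux_def[symmetric], simplified]
  show ?case
  proof (cases g)
    case Z
    then show ?thesis using J' by (auto intro: eval_Z)
  next
    case S
    then show ?thesis using J' by (cases xs) (auto intro: eval_S)
  next
    case (Id n)
    then show ?thesis using J' by (auto simp: llen_enc lnth_enc intro: eval_Id)
  next
    case (Cn f gs)
    define ys where "ys = list_decode aux"
    have aux: "aux = list_encode ys" unfolding ys_def by simp
    from J' Cn have l: "length ys = length gs"
      and a: "\<forall>k<length gs. hasN C i (fc (code (gs ! k)) (list_encode xs) (ys ! k))"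
      and b: "hasN C i (fc (code f) (list_encode ys) y)"
      by (auto simp: aux llen_enc lnth_enc pe_def fc_def)
    show ?thesis unfolding Cn
      by (rule eval_Cn[where ys=ys]) (use l a b H in auto)
  next
    case (Pr f g2)
    from J' Pr have ne: "xs \<noteq> []" by (auto simp: list_encode_0)
    then obtain n xs' where xs: "xs = n # xs'" by (cases xs) auto
    show ?thesis
    proof (cases n)
      case 0
      with J' Pr xs have "hasN C i (fc (code f) (list_encode xs') y)"
        by (auto simp: pe_def fc_def)
      then show ?thesis using H xs 0 Pr by (auto intro: eval_Pr0)
    next
      case (Suc n')
      with J' Pr xs have a: "hasN C i (fc (code (Pr f g2)) (list_encode (n' # xs')) aux)"
        and b: "hasN C i (fc (code g2) (list_encode (n' # aux # xs')) y)"
        by (auto simp: pe_def fc_def lcons_def)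
      show ?thesis unfolding Pr xs Suc
        by (rule eval_PrS[OF H[OF a] H[OF b]])
    qed
  next
    case (Mn f)
    from J' Mn have a: "hasN C i (fc (code f) (list_encode (y # xs)) 0)"
      and b: "\<forall>m<y. hasN C i (fc (code f) (list_encode (m # xs)) (Suc (lnth aux m)))"
      by (auto simp: pe_def fc_def)
    show ?thesis unfolding Mn
      by (rule eval_Mn) (use a b H in blast)+
  qed
qed

definition validL :: "nat list \<Rightarrow> bool" where
  "validL cs \<longleftrightarrow> (\<forall>i<length cs. justE (cs ! i) (\<lambda>F. \<exists>j<i. pfst (cs ! j) = F))"

definition inL :: "nat list \<Rightarrow> nat \<Rightarrow> bool" where
  "inL cs F \<longleftrightarrow> (\<exists>j<length cs. pfst (cs ! j) = F)"

lemma validL_N: "validL cs \<Longrightarrow> \<forall>i<llen (list_encode cs). justN (list_encode cs) i"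
  unfolding validL_def justN_def hasN_def llen_enc
proof (intro allI impI)
  fix i assume v: "\<forall>i<length cs. justE (cs ! i) (\<lambda>F. \<exists>j<i. pfst (cs ! j) = F)" and i: "i < length cs"
  show "justE (lnth (list_encode cs) i) (\<lambda>F. \<exists>j<i. pfst (lnth (list_encode cs) j) = F)"
  proof -
    have "justE (cs ! i) (\<lambda>F. \<exists>j<i. pfst (cs ! j) = F)" using v i by blast
    then have "justE (cs ! i) (\<lambda>F. \<exists>j<i. pfst (lnth (list_encode cs) j) = F)"
    proof (rule justE_mono)
      fix F assume "\<exists>j<i. pfst (cs ! j) = F"
      then obtain j where "j < i" "pfst (cs ! j) = F" by blast
      then show "\<exists>j<i. pfst (lnth (list_encode cs) j) = F" using i by (metis lnth_enc order.strict_trans)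
    qed
    then show ?thesis using i by (simp add: lnth_enc)
  qed
qed

lemma inL_N: "inL cs F \<Longrightarrow> \<exists>j<llen (list_encode cs). pfst (lnth (list_encode cs) j) = F"
  unfolding inL_def by (auto simp: llen_enc lnth_enc)

lemma validL_append: "validL a \<Longrightarrow> validL b \<Longrightarrow> validL (a @ b)"
  unfolding validL_def
proof (intro allI impI)
  fix i
  assume va: "\<forall>i<length a. justE (a ! i) (\<lambda>F. \<exists>j<i. pfst (a ! j) = F)"
    and vb: "\<forall>i<length b. justE (b ! i) (\<lambda>F. \<exists>j<i. pfst (b ! j) = F)"
    and i: "i < length (a @ b)"
  show "justE ((a @ b) ! i) (\<lambda>F. \<exists>j<i. pfst ((a @ b) ! j) = F)"
  proof (cases "i < length a")
    case True
    have "justE (a ! i) (\<lambda>F. \<exists>j<i. pfst (a ! j) = F)" using va True by blast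
    then have "justE (a ! i) (\<lambda>F. \<exists>j<i. pfst ((a @ b) ! j) = F)"
    proof (rule justE_mono)
      fix F assume "\<exists>j<i. pfst (a ! j) = F"
      then obtain j where "j < i" "pfst (a ! j) = F" by blast
      then show "\<exists>j<i. pfst ((a @ b) ! j) = F" using True by (metis nth_append order.strict_trans)
    qed
    then show ?thesis using True by (simp add: nth_append)
  next
    case False
    then have i': "i - length a < length b" using i by simp
    have "justE (b ! (i - length a)) (\<lambda>F. \<exists>j<i - length a. pfst (b ! j) = F)" using vb i' by blast
    then have "justE (b ! (i - length a)) (\<lambda>F. \<exists>j<i. pfst ((a @ b) ! j) = F)"
    proof (rule justE_mono)
      fix F assume "\<exists>j<i - length a. pfst (b ! j) = F"
      then obtain j where "j < i - length a" "pfst (b ! j) = F" by blast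
      then show "\<exists>j<i. pfst ((a @ b) ! j) = F"
        by (intro exI[of _ "j + length a"]) (auto simp: nth_append)
    qed
    then show ?thesis using False by (simp add: nth_append)
  qed
qed

lemma validL_snoc: "validL a \<Longrightarrow> justE e (inL a) \<Longrightarrow> validL (a @ [e])"
  unfolding validL_def
proof (intro allI impI)
  fix i
  assume va: "\<forall>i<length a. justE (a ! i) (\<lambda>F. \<exists>j<i. pfst (a ! j) = F)"
    and e: "justE e (inL a)" and i: "i < length (a @ [e])"
  show "justE ((a @ [e]) ! i) (\<lambda>F. \<exists>j<i. pfst ((a @ [e]) ! j) = F)"
  proof (cases "i < length a")
    case True
    have "justE (a ! i) (\<lambda>F. \<exists>j<i. pfst (a ! j) = F)" using va True by blast
    then have "justE (a ! i) (\<lambda>F. \<exists>j<i. pfst ((a @ [e]) ! j) = F)"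
    proof (rule justE_mono)
      fix F assume "\<exists>j<i. pfst (a ! j) = F"
      then obtain j where "j < i" "pfst (a ! j) = F" by blast
      then show "\<exists>j<i. pfst ((a @ [e]) ! j) = F" using True by (metis nth_append order.strict_trans)
    qed
    then show ?thesis using True by (simp add: nth_append)
  next
    case False
    then have ii: "i = length a" using i by simp
    have "justE e (\<lambda>F. \<exists>j<i. pfst ((a @ [e]) ! j) = F)"
    proof (rule justE_mono[OF e])
      fix F assume "inL a F"
      then obtain j where "j < length a" "pfst (a ! j) = F" unfolding inL_def by blast
      then show "\<exists>j<i. pfst ((a @ [e]) ! j) = F" using ii by (metis nth_append)
    qed
    then show ?thesis using ii by simp
  qed
qed

lemma validL_concat: "\<forall>x\<in>set xss. validL x \<Longrightarrow> validL (concat xss)"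
proof (induction xss)
  case Nil then show ?case by (simp add: validL_def)
next
  case (Cons a xss) then show ?case by (simp add: validL_append)
qed

lemma inL_appendL: "inL a F \<Longrightarrow> inL (a @ b) F"
  unfolding inL_def by (auto simp: nth_append)
lemma inL_appendR: "inL b F \<Longrightarrow> inL (a @ b) F"
  unfolding inL_def
proof -
  assume "\<exists>j<length b. pfst (b ! j) = F"
  then obtain j where "j < length b" "pfst (b ! j) = F" by blast
  then show "\<exists>j<length (a @ b). pfst ((a @ b) ! j) = F"
    by (intro exI[of _ "j + length a"]) (auto simp: nth_append)
qed
lemma inL_concat: "x \<in> set xss \<Longrightarrow> inL x F \<Longrightarrow> inL (concat xss) F"
  by (induction xss) (auto intro: inL_appendL inL_appendR)
lemma inL_last: "inL (a @ [pe F aux]) F"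
  unfolding inL_def by (intro exI[of _ "length a"]) auto

lemma choice_nat: "\<forall>i<n. \<exists>x. P i x \<Longrightarrow> \<exists>f. \<forall>i<n. P i (f i)"
  by (metis (mono_tags))

lemma complete: "eval f xs y \<Longrightarrow> \<exists>cs. validL cs \<and> inL cs (fc (code f) (list_encode xs) y)"
proof (induction rule: eval.induct)
  case (eval_Z xs)
  let ?cs = "[] @ [pe (fc (code Z) (list_encode xs) 0) 0]"
  have "validL ?cs" by (rule validL_snoc) (auto simp: validL_def justE_def fc_def pe_def)
  then show ?case using inL_last by blast
next
  case (eval_S x xs)
  let ?cs = "[] @ [pe (fc (code S) (list_encode (x # xs)) (Suc x)) 0]"
  have "validL ?cs" by (rule validL_snoc) (auto simp: validL_def justE_def fc_def pe_def)
  then show ?case using inL_last by blast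
next
  case (eval_Id i xs)
  let ?cs = "[] @ [pe (fc (code (Id i)) (list_encode xs) (xs ! i)) 0]"
  have "validL ?cs" by (rule validL_snoc) (use eval_Id in \<open>auto simp: validL_def justE_def fc_def pe_def llen_enc lnth_enc\<close>)
  then show ?case using inL_last by blast
next
  case (eval_Cn ys gs xs f y)
  then have "\<forall>i<length gs. \<exists>cs. validL cs \<and> inL cs (fc (code (gs ! i)) (list_encode xs) (ys ! i))" by blast
  then obtain csf where csf: "\<forall>i<length gs. validL (csf i) \<and> inL (csf i) (fc (code (gs ! i)) (list_encode xs) (ys ! i))"
    using choice_nat[where P="\<lambda>i cs. validL cs \<and> inL cs (fc (code (gs ! i)) (list_encode xs) (ys ! i))"] by blast
  obtain cs0 where cs0: "validL cs0" "inL cs0 (fc (code f) (list_encode ys) y)" using eval_Cn.IH(2) by blast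
  let ?pre = "concat (map csf [0..<length gs]) @ cs0"
  let ?cs = "?pre @ [pe (fc (code (Cn f gs)) (list_encode xs) y) (list_encode ys)]"
  have vpre: "validL ?pre" using csf cs0 by (auto intro!: validL_append validL_concat)
  have inpre: "inL ?pre (fc (code (gs ! k)) (list_encode xs) (ys ! k))" if "k < length gs" for k
    using csf that by (auto intro!: inL_appendL inL_concat[where x="csf k"])
  have "justE (pe (fc (code (Cn f gs)) (list_encode xs) y) (list_encode ys)) (inL ?pre)"
    unfolding justE_def Let_def
    using eval_Cn.hyps(1) inpre inL_appendR[OF cs0(2)]
    by (simp add: fc_def pe_def lcons_def llen_enc lnth_enc)
  then have "validL ?cs" by (rule validL_snoc[OF vpre])
  then show ?case using inL_last by blast
next
  case (eval_Pr0 f xs y g)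
  then obtain cs0 where cs0: "validL cs0" "inL cs0 (fc (code f) (list_encode xs) y)" by blast
  let ?cs = "cs0 @ [pe (fc (code (Pr f g)) (list_encode (0 # xs)) y) 0]"
  have "justE (pe (fc (code (Pr f g)) (list_encode (0 # xs)) y) 0) (inL cs0)"
    unfolding justE_def Let_def using cs0(2) by (simp add: fc_def pe_def lcons_def)
  then have "validL ?cs" by (rule validL_snoc[OF cs0(1)])
  then show ?case using inL_last by blast
next
  case (eval_PrS f g n xs y z)
  then obtain cs1 cs2 where cs1: "validL cs1" "inL cs1 (fc (code (Pr f g)) (list_encode (n # xs)) y)"
    and cs2: "validL cs2" "inL cs2 (fc (code g) (list_encode (n # y # xs)) z)" by blast
  let ?pre = "cs1 @ cs2"
  let ?cs = "?pre @ [pe (fc (code (Pr f g)) (list_encode (Suc n # xs)) z) y]"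
  have "justE (pe (fc (code (Pr f g)) (list_encode (Suc n # xs)) z) y) (inL ?pre)"
    unfolding justE_def Let_def using inL_appendL[OF cs1(2)] inL_appendR[OF cs2(2)]
    by (simp add: fc_def pe_def lcons_def)
  then have "validL ?cs" by (rule validL_snoc[OF validL_append[OF cs1(1) cs2(1)]])
  then show ?case using inL_last by blast
next
  case (eval_Mn f n xs)
  obtain cs0 where cs0: "validL cs0" "inL cs0 (fc (code f) (list_encode (n # xs)) 0)" using eval_Mn.IH(1) by blast
  have "\<forall>m<n. \<exists>p. validL (fst p) \<and> inL (fst p) (fc (code f) (list_encode (m # xs)) (Suc (snd p)))"
    using eval_Mn.IH(2) by fastforce
  then obtain csv where csv: "\<forall>m<n. validL (fst (csv m)) \<and> inL (fst (csv m)) (fc (code f) (list_encode (m # xs)) (Suc (snd (csv m))))"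
    using choice_nat[where P="\<lambda>m p. validL (fst p) \<and> inL (fst p) (fc (code f) (list_encode (m # xs)) (Suc (snd p)))"] by blast
  let ?pre = "concat (map (fst \<circ> csv) [0..<n]) @ cs0"
  let ?aux = "list_encode (map (snd \<circ> csv) [0..<n])"
  let ?cs = "?pre @ [pe (fc (code (Mn f)) (list_encode xs) n) ?aux]"
  have vpre: "validL ?pre" using csv cs0 by (auto intro!: validL_append validL_concat)
  have inpre: "inL ?pre (fc (code f) (list_encode (m # xs)) (Suc (snd (csv m))))" if "m < n" for m
    using csv that by (auto intro!: inL_appendL inL_concat[where x="fst (csv m)"])
  have "justE (pe (fc (code (Mn f)) (list_encode xs) n) ?aux) (inL ?pre)"
    unfolding justE_def Let_def using inpre inL_appendR[OF cs0(2)]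
    by (simp add: fc_def pe_def lcons_def llen_enc lnth_enc)
  then have "validL ?cs" by (rule validL_snoc[OF vpre])
  then show ?case using inL_last by blast
qed

definition trm :: "nat \<Rightarrow> (nat list \<Rightarrow> nat) \<Rightarrow> recf" where
  "trm k F = (SOME f. \<forall>xs. length xs = k \<longrightarrow> eval f xs (F xs))"

lemma trm_eval: "rt k F \<Longrightarrow> length xs = k \<Longrightarrow> eval (trm k F) xs (F xs)"
proof -
  assume a: "rt k F" "length xs = k"
  have "\<exists>f. \<forall>xs. length xs = k \<longrightarrow> eval f xs (F xs)" using a(1) rt_def by simp
  then have "\<forall>xs. length xs = k \<longrightarrow> eval (trm k F) xs (F xs)" unfolding trm_def by (rule someI_ex)
  then show ?thesis using a(2) by simp
qed

definition chk3 :: "nat list \<Rightarrow> nat" where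
  "chk3 ys = (if checkN (ys ! 0) (ys ! 1) (ys ! 2) then 0 else 1)"

lemma rt_chk3: "rt 3 chk3"
proof -
  have "rt 3 (\<lambda>ys. if checkN (ys ! 0) (ys ! 1) (ys ! 2) then 0 else 1)"
    by (rule rt_if[OF rtp_checkN rt_const rt_const])
  then show ?thesis unfolding chk3_def[abs_def] .
qed

definition Ut :: recf where
  "Ut = Cn (trm 1 (\<lambda>ys. psnd (ys ! 0))) [Mn (trm 3 chk3)]"

lemma rt_psnd1: "rt 1 (\<lambda>ys. psnd (ys ! 0))"
  by (intro rt_psnd rt_proj) simp

lemma U_complete:
  assumes ev: "eval f [x] y"
  shows "eval Ut [code f, x] y"
proof -
  obtain cs where cs: "validL cs" "inL cs (fc (code f) (list_encode [x]) y)"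
    using complete[OF ev] by blast
  have ex: "checkN (pe (list_encode cs) y) (code f) x"
    unfolding checkN_def using validL_N[OF cs(1)] inL_N[OF cs(2)]
    by (simp add: lcons_def pe_def)
  define w where "w = (LEAST w. checkN w (code f) x)"
  have cw: "checkN w (code f) x" unfolding w_def by (rule LeastI[where P="\<lambda>w. checkN w (code f) x", OF ex])
  have nw: "\<not> checkN m (code f) x" if "m < w" for m
    using that unfolding w_def by (rule not_less_Least)
  have mn: "eval (Mn (trm 3 chk3)) [code f, x] w"
  proof (rule eval_Mn)
    show "eval (trm 3 chk3) [w, code f, x] 0"
      using trm_eval[OF rt_chk3, of "[w, code f, x]"] cw by (simp add: chk3_def)
    show "\<forall>m<w. \<exists>v. eval (trm 3 chk3) [m, code f, x] (Suc v)"
    proof (intro allI impI exI)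
      fix m assume "m < w"
      then have "chk3 [m, code f, x] = Suc 0" using nw by (simp add: chk3_def)
      then show "eval (trm 3 chk3) [m, code f, x] (Suc 0)"
        using trm_eval[OF rt_chk3, of "[m, code f, x]"] by simp
    qed
  qed
  from cw obtain j where "j < llen (pfst w)" "pfst (lnth (pfst w) j) = fc (code f) (list_encode [x]) (psnd w)"
    and V: "\<forall>i<llen (pfst w). justN (pfst w) i"
    unfolding checkN_def by (auto simp: lcons_def pe_def)
  then have "eval f [x] (psnd w)" using sound[OF V] by blast
  then have py: "psnd w = y" using eval_det ev by blast
  show ?thesis unfolding Ut_def
    by (rule eval_Cn[where ys="[w]"]) (use mn trm_eval[OF rt_psnd1, of "[w]"] py in auto)
qed

lemma rt_pow2_1: "rt 1 (\<lambda>ys. 2 ^ (ys ! 0))"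
proof -
  have "rt 1 (\<lambda>ys. rec_nat 1 (\<lambda>i r. (\<lambda>a b c. b + b) i r ys) (ys ! 0))"
    by (rule rt_rec; intro rt_add rt_proj rt_const; simp)
  moreover have "rec_nat 1 (\<lambda>i r. r + r) n = (2::nat) ^ n" for n by (induction n) auto
  ultimately show ?thesis by (rule rt_cong)
qed

lemma rt_pow2: "rt k A \<Longrightarrow> rt k (\<lambda>xs. 2 ^ (A xs))"
  by (rule rt_app1[OF rt_pow2_1])

definition ddiv :: "nat \<Rightarrow> nat \<Rightarrow> nat" where
  "ddiv n d = (if d = 0 then 0 else bmin (Suc n) (\<lambda>q. n < Suc q * d))"

lemma ddiv_eq: "ddiv n d = n div d"
proof (cases "d = 0")
  case True then show ?thesis by (simp add: ddiv_def)
next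
  case False
  have "bmin (Suc n) (\<lambda>q. n < Suc q * d) = n div d"
  proof (rule bmin_eq)
    have m: "n div d * d + n mod d = n" by (rule div_mult_mod_eq)
    have l: "n mod d < d" using False by simp
    have e: "Suc (n div d) * d = d + n div d * d" by simp
    show "n < Suc (n div d) * d" unfolding e using m l by linarith
    show "n div d < Suc n" using div_le_dividend[of n d] by linarith
    show "\<forall>i<n div d. \<not> n < Suc i * d"
    proof (intro allI impI)
      fix i assume "i < n div d"
      then have "Suc i * d \<le> n div d * d" by (intro mult_le_mono1) simp
      then show "\<not> n < Suc i * d" using m by linarith
    qed
  qed
  then show ?thesis using False by (simp add: ddiv_def)
qed

lemma rt_div2: "rt 2 (\<lambda>ys. ys ! 0 div ys ! 1)"
proof -
  have "rt 2 (\<lambda>ys. ddiv (ys ! 0) (ys ! 1))"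
    unfolding ddiv_def
    by (intro rt_intros; (rule rtp_less[where A="\<lambda>ys. tl ys ! 0"], intro rt_intros)?; simp)
  then show ?thesis by (simp add: ddiv_eq)
qed

lemma rt_div: "rt k A \<Longrightarrow> rt k B \<Longrightarrow> rt k (\<lambda>xs. A xs div B xs)"
  by (rule rt_app2[OF rt_div2])

lemma rt_mod: "rt k A \<Longrightarrow> rt k B \<Longrightarrow> rt k (\<lambda>xs. A xs mod B xs)"
proof -
  assume a: "rt k A" and b: "rt k B"
  have "rt k (\<lambda>xs. A xs - B xs * (A xs div B xs))" by (intro rt_sub rt_mult rt_div a b)
  then show ?thesis by (rule rt_cong) (simp add: minus_mult_div_eq_mod)
qed

definition lowbit :: "nat \<Rightarrow> nat" where
  "lowbit n = bmin n (\<lambda>i. n div 2 ^ i mod 2 = 1)"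

lemma rt_lowbit1: "rt 1 (\<lambda>ys. lowbit (ys ! 0))"
  unfolding lowbit_def
  by (rule rt_bmin[where P="\<lambda>i xs. xs ! 0 div 2 ^ i mod 2 = 1"];
      intro rt_proj rtp_eq rt_mod rt_div rt_pow2 rt_proj1 rt_const; simp)

lemma rt_lowbit: "rt k A \<Longrightarrow> rt k (\<lambda>xs. lowbit (A xs))"
  by (rule rt_app1[OF rt_lowbit1])

lemma lowbit_set_encode:
  assumes "finite D" "D \<noteq> {}"
  shows "lowbit (set_encode D) = Min D"
  unfolding lowbit_def
proof (rule bmin_eq)
  have dec: "set_decode (set_encode D) = D" using assms(1) by simp
  have mem: "x \<in> D \<longleftrightarrow> odd (set_encode D div 2 ^ x)" for x
    using dec unfolding set_decode_def by blast
  show "set_encode D div 2 ^ Min D mod 2 = 1"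
    using mem[of "Min D"] Min_in[OF assms] by (simp add: odd_iff_mod_2_eq_one)
  have "2 ^ Min D \<le> set_encode D"
    unfolding set_encode_def using assms Min_in[OF assms]
    by (intro member_le_sum) auto
  then show "Min D < set_encode D" using less_exp[of "Min D"] by linarith
  show "\<forall>i<Min D. \<not> set_encode D div 2 ^ i mod 2 = 1"
    using mem assms by (auto simp: odd_iff_mod_2_eq_one[symmetric])
qed

lemma pe00: "prod_encode (0, 0) = 0"
  by (metis prod_decode_inverse prod_decode_def prod_decode_aux.simps le0 diff_zero)

lemma code_Z: "code Z = 0"
  apply (simp only: code.simps)
  apply (rule pe00)
  done

lemma evCn_inv: "eval (Cn f gs) xs y \<Longrightarrow> \<exists>ys. length ys = length gs \<and> (\<forall>i<length gs. eval (gs ! i) xs (ys ! i)) \<and> eval f ys y"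
  by (erule evCn_E) auto

definition gcond :: "nat list \<Rightarrow> nat" where
  "gcond ys = (if pfst (ys ! 3) = ys ! 1 \<and> (ys ! 2 = 0 \<or> psnd (ys ! 3) < ys ! 2) then 0 else 1)"

lemma rt_gcond: "rt 4 gcond"
proof -
  have "rt 4 (\<lambda>ys. if pfst (ys ! 3) = ys ! 1 \<and> (ys ! 2 = 0 \<or> psnd (ys ! 3) < ys ! 2) then 0 else 1)"
    by (intro rt_intros2; simp)
  then show ?thesis unfolding gcond_def[abs_def] .
qed

definition Gm :: recf where "Gm = Mn (trm 4 gcond)"

definition gram :: "nat \<Rightarrow> nat \<Rightarrow> recf" where
  "gram p j = Cn Gm [num p, num j, Id 0]"

lemma evMn_inv: "eval (Mn f) xs y \<Longrightarrow> eval f (y # xs) 0 \<and> (\<forall>m<y. \<exists>v. eval f (m # xs) (Suc v))"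
  by (erule evMn_E) auto

lemma eval_gram: "eval (gram p j) [x] y \<longleftrightarrow> y = 0 \<and> pfst x = p \<and> (j = 0 \<or> psnd x < j)"
proof
  assume ev: "eval (gram p j) [x] y"
  obtain ys where l: "length ys = length [num p, num j, Id 0]"
    and a: "\<forall>i<length [num p, num j, Id 0]. eval ([num p, num j, Id 0] ! i) [x] (ys ! i)"
    and b: "eval Gm ys y"
    using evCn_inv[OF ev[unfolded gram_def]] by blast
  from l obtain a1 a2 a3 where ys: "ys = [a1, a2, a3]" by (auto simp: numeral_3_eq_3 length_Suc_conv)
  have "eval (num p) [x] a1" using a ys by auto
  then have 1: "a1 = p" using eval_det eval_num by blast
  have "eval (num j) [x] a2" using a ys by auto
  then have 2: "a2 = j" using eval_det eval_num by blast
  have "eval (Id 0) [x] a3" using a ys by auto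
  moreover have "eval (Id 0) [x] x" using eval_Id[of 0 "[x]"] by simp
  ultimately have 3: "a3 = x" using eval_det by blast
  have mn: "eval (trm 4 gcond) [y, p, j, x] 0 \<and> (\<forall>m<y. \<exists>v. eval (trm 4 gcond) [m, p, j, x] (Suc v))"
    using evMn_inv[OF b[unfolded Gm_def ys 1 2 3]] by simp
  have "eval (trm 4 gcond) [y, p, j, x] (gcond [y, p, j, x])" by (rule trm_eval[OF rt_gcond]) simp
  then have g: "gcond [y, p, j, x] = 0" using mn eval_det by blast
  have e0: "eval (trm 4 gcond) [0, p, j, x] (gcond [0, p, j, x])" by (rule trm_eval[OF rt_gcond]) simp
  have g0: "gcond [0, p, j, x] = 0" using g by (simp add: gcond_def)
  have "y = 0"
  proof (rule ccontr)
    assume "y \<noteq> 0"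
    then obtain v where "eval (trm 4 gcond) [0, p, j, x] (Suc v)" using mn by blast
    then show False using e0 g0 eval_det by fastforce
  qed
  then show "y = 0 \<and> pfst x = p \<and> (j = 0 \<or> psnd x < j)" using g
    by (simp add: gcond_def split: if_splits)
next
  assume c: "y = 0 \<and> pfst x = p \<and> (j = 0 \<or> psnd x < j)"
  have "eval Gm [p, j, x] 0" unfolding Gm_def
  proof (rule eval_Mn)
    show "eval (trm 4 gcond) [0, p, j, x] 0"
      using trm_eval[OF rt_gcond, of "[0, p, j, x]"] c by (simp add: gcond_def)
  qed simp
  then show "eval (gram p j) [x] y" unfolding gram_def using c
    by (intro eval_Cn[where ys="[p, j, x]"]) (auto simp: eval_num intro: eval_Id[of 0 "[x]", simplified] simp: less_Suc_eq numeral_3_eq_3)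
qed

definition gcode :: "nat \<Rightarrow> nat \<Rightarrow> nat" where "gcode p j = code (gram p j)"

lemma W_gcode: "W (gcode p j) = {x. pfst x = p \<and> (j = 0 \<or> psnd x < j)}"
  unfolding gcode_def W_code eval_gram by auto

definition codenum :: "nat \<Rightarrow> nat" where "codenum n = code (num n)"

lemma rt_codenum1: "rt 1 (\<lambda>ys. codenum (ys ! 0))"
proof -
  have "rt 1 (\<lambda>ys. rec_nat 0 (\<lambda>i r. (\<lambda>a b c. pe 3 (pe (code S) (lcons b 0))) i r ys) (ys ! 0))"
    by (rule rt_rec; intro rt_pe rt_lcons rt_proj rt_const; simp)
  moreover have "rec_nat 0 (\<lambda>i r. pe 3 (pe (code S) (lcons r 0))) n = codenum n" for n
  proof (induction n)
    case 0 show ?case by (simp only: codenum_def num.simps code_Z nat.rec(1))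
  next
    case (Suc n) then show ?case by (simp add: codenum_def pe_def lcons_def)
  qed
  ultimately show ?thesis by (rule rt_cong)
qed

lemma rt_codenum: "rt k A \<Longrightarrow> rt k (\<lambda>xs. codenum (A xs))"
  by (rule rt_app1[OF rt_codenum1])

lemma gcode_eq: "gcode p j = pe 3 (pe (code Gm) (lcons (codenum p) (lcons (codenum j) (lcons (code (Id 0)) 0))))"
  by (simp add: gcode_def gram_def codenum_def pe_def lcons_def)

lemma rt_gcode: "rt k A \<Longrightarrow> rt k B \<Longrightarrow> rt k (\<lambda>xs. gcode (A xs) (B xs))"
  unfolding gcode_eq by (intro rt_pe rt_lcons rt_codenum rt_const)

section \<open>The learner\<close>

definition acol :: "nat \<Rightarrow> nat" where "acol n = (if n = 0 then 0 else pfst (lowbit n))"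

lemma rt_acol1: "rt 1 (\<lambda>ys. acol (ys ! 0))"
  unfolding acol_def by (intro rt_if rtp_eq rt_pfst rt_lowbit rt_proj rt_const; simp)

definition Ht :: recf where
  "Ht = Cn Ut [trm 1 (\<lambda>ys. acol (ys ! 0)), trm 1 (\<lambda>ys. pe (acol (ys ! 0)) (ys ! 0))]"

lemma eval_Ht: "eval Ut [acol n, pe (acol n) n] y \<Longrightarrow> eval Ht [n] y"
proof -
  assume u: "eval Ut [acol n, pe (acol n) n] y"
  have r2: "rt 1 (\<lambda>ys. pe (acol (ys ! 0)) (ys ! 0))"
    by (intro rt_pe rt_app1[OF rt_acol1] rt_proj; simp)
  show ?thesis unfolding Ht_def
    by (rule eval_Cn[where ys="[acol n, pe (acol n) n]"])
       (use u trm_eval[OF rt_acol1, of "[n]"] trm_eval[OF r2, of "[n]"] in \<open>auto simp: less_Suc_eq\<close>)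
qed

definition hL :: "nat \<Rightarrow> nat option" where
  "hL n = (if \<exists>y. eval Ht [n] y then Some (THE y. eval Ht [n] y) else None)"

lemma hL_pc: "partial_computable hL"
  unfolding partial_computable_def
proof (intro exI allI)
  fix x y
  have t: "eval Ht [x] y' \<Longrightarrow> (THE y. eval Ht [x] y) = y'" for y'
    using eval_det by (intro the_equality) blast+
  show "hL x = Some y \<longleftrightarrow> eval Ht [x] y"
    unfolding hL_def using t by auto
qed

lemma hL_eval: "eval Ht [n] y \<Longrightarrow> hL n = Some y"
proof -
  assume e: "eval Ht [n] y"
  have t: "(THE y. eval Ht [n] y) = y"
    using eval_det e by (intro the_equality) blast+
  then show ?thesis unfolding hL_def using e by auto
qed

lemma hL_0: "hL 0 = Some 0"
proof -
  have "eval Z [pe (code Z) 0] 0" by (rule eval_Z)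
  then have "eval Ut [code Z, pe (code Z) 0] 0" by (rule U_complete)
  moreover have "acol 0 = code Z" unfolding acol_def code_Z by simp
  ultimately have "eval Ut [acol 0, pe (acol 0) 0] 0" by (simp only:)
  then show ?thesis by (intro hL_eval eval_Ht)
qed

lemma hL_col:
  assumes "finite D" "D \<noteq> {}" "\<forall>x\<in>D. pfst x = code g" "eval g [pe (code g) (set_encode D)] y"
  shows "hL (set_encode D) = Some y"
proof -
  have ne: "set_encode D \<noteq> 0"
    using assms(1,2) by (metis set_encode_empty set_encode_eq finite.emptyI)
  have "acol (set_encode D) = code g"
    using ne lowbit_set_encode[OF assms(1,2)] Min_in[OF assms(1,2)] assms(3) by (simp add: acol_def)
  then show ?thesis using U_complete[OF assms(4)] by (intro hL_eval eval_Ht) simp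
qed

section \<open>Columns and finite pieces\<close>

definition Col :: "nat \<Rightarrow> nat set" where "Col p = {x. pfst x = p}"
definition Dk :: "nat \<Rightarrow> nat \<Rightarrow> nat set" where "Dk p k = {x. pfst x = p \<and> psnd x \<le> k}"

lemma Dk_img: "Dk p k = (\<lambda>j. pe p j) ` {..k}"
proof (rule set_eqI)
  fix x show "x \<in> Dk p k \<longleftrightarrow> x \<in> (\<lambda>j. pe p j) ` {..k}"
  proof
    assume "x \<in> Dk p k"
    then have "pfst x = p" "psnd x \<le> k" unfolding Dk_def by auto
    then have "x = pe p (psnd x)" "psnd x \<in> {..k}" using pe_pfst_psnd[of x] by auto
    then show "x \<in> (\<lambda>j. pe p j) ` {..k}" by blast
  next
    assume "x \<in> (\<lambda>j. pe p j) ` {..k}"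
    then show "x \<in> Dk p k" unfolding Dk_def by auto
  qed
qed

lemma finite_Dk[simp]: "finite (Dk p k)" unfolding Dk_img by simp

lemma Dk_Suc: "Dk p (Suc k) = insert (pe p (Suc k)) (Dk p k)"
  unfolding Dk_img by (simp add: atMost_Suc)

lemma pe_notin_Dk: "pe p (Suc k) \<notin> Dk p k"
  unfolding Dk_def by simp

lemma Dk_0: "Dk p 0 = {pe p 0}"
  unfolding Dk_img by simp

lemma W_gcode0: "W (gcode p 0) = Col p"
  unfolding W_gcode Col_def by simp

lemma W_gcodeS: "W (gcode p (Suc k)) = Dk p k"
  unfolding W_gcode Dk_def by auto

lemma pe_mono: "k \<le> t \<Longrightarrow> pe p k \<le> pe p t"
  unfolding pe_def prod_encode_def by (simp add: triangle_mono)

lemma pe_smono: "k < t \<Longrightarrow> pe p k < pe p t"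
proof -
  assume "k < t"
  then have "Suc (p + k) \<le> p + t" by simp
  then have "triangle (Suc (p + k)) \<le> triangle (p + t)" by (rule triangle_mono)
  then have "triangle (p + k) < triangle (p + t)" by simp
  then show ?thesis unfolding pe_def prod_encode_def by simp
qed

lemma le_pe2: "k \<le> pe p k"
  unfolding pe_def by (rule le_prod_encode_2)

lemma canon_eq: "canon D = set_encode D"
  unfolding canon_def set_encode_def by simp

lemma set_encode_ge: "finite D \<Longrightarrow> x \<in> D \<Longrightarrow> 2 ^ x \<le> set_encode D"
  unfolding set_encode_def by (intro member_le_sum) auto

lemma set_encode_atMost: "set_encode {..m} = 2 ^ Suc m - 1"
proof (induction m)
  case 0 then show ?case by (simp add: set_encode_def)
next
  case (Suc m)
  have "set_encode {..Suc m} = 2 ^ Suc m + set_encode {..m}"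
    unfolding atMost_Suc by (rule set_encode_insert) auto
  then show ?case using Suc by simp
qed

lemma set_encode_mono: "finite A \<Longrightarrow> finite B \<Longrightarrow> A \<subseteq> B \<Longrightarrow> set_encode A \<le> set_encode B"
  by (rule subset_decode_imp_le) simp

lemma set_encode_lt: "finite D \<Longrightarrow> \<forall>x\<in>D. x \<le> m \<Longrightarrow> set_encode D < 2 ^ Suc m"
proof -
  assume f: "finite D" and b: "\<forall>x\<in>D. x \<le> m"
  have "set_encode D \<le> set_encode {..m}" using f b by (intro set_encode_mono) auto
  also have "\<dots> < 2 ^ Suc m" unfolding set_encode_atMost by simp
  finally show ?thesis .
qed

lemma cp_sub: "content_prefix T n \<subseteq> content T"
  unfolding content_prefix_def content_def by auto

lemma cp_finite: "finite (content_prefix T n)"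
proof -
  have "content_prefix T n \<subseteq> (\<lambda>m. the (T m)) ` {..<n}"
    unfolding content_prefix_def by force
  then show ?thesis using finite_subset by blast
qed

lemma cp_mono: "m \<le> n \<Longrightarrow> content_prefix T m \<subseteq> content_prefix T n"
  unfolding content_prefix_def using less_le_trans by blast

lemma cp_eventually_all:
  assumes "finite L" "content T = L"
  shows "\<exists>N. \<forall>n\<ge>N. content_prefix T n = L"
proof -
  have "\<forall>x\<in>L. \<exists>m. T m = Some x" using assms(2) unfolding content_def by auto
  then obtain mm where mm: "\<forall>x\<in>L. T (mm x) = Some x" by metis
  define N where "N = Suc (Max (insert 0 (mm ` L)))"
  have "\<forall>x\<in>L. mm x < N" unfolding N_def using assms(1) by (simp add: le_imp_less_Suc)
  have lt: "\<forall>x\<in>L. mm x < N" unfolding N_def using assms(1) by (simp add: le_imp_less_Suc)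
  have "L \<subseteq> content_prefix T n" if nN: "n \<ge> N" for n
  proof
    fix x assume x: "x \<in> L"
    have "mm x < n" using x nN lt by fastforce
    then show "x \<in> content_prefix T n" unfolding content_prefix_def using mm x by blast
  qed
  then show ?thesis using cp_sub assms(2) by blast
qed

lemma cp_eventually_ne:
  assumes "content T \<noteq> {}"
  shows "\<exists>N. \<forall>n\<ge>N. content_prefix T n \<noteq> {}"
proof -
  obtain x m where xm: "T m = Some x" using assms unfolding content_def by auto
  have "content_prefix T n \<noteq> {}" if nm: "n \<ge> Suc m" for n
  proof -
    have "m < n" using nm by simp
    then have "x \<in> content_prefix T n" unfolding content_prefix_def using xm by blast
    then show ?thesis by blast
  qed
  then show ?thesis by blast
qed

lemma text_exists:
  assumes "finite L" "L \<noteq> {}"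
  shows "\<exists>T. content T = L"
proof -
  obtain x where x: "x \<in> L" using assms(2) by blast
  define xs where "xs = sorted_list_of_set L"
  have sx: "set xs = L" unfolding xs_def using assms(1) by simp
  define T where "T k = (if k < length xs then Some (xs ! k) else Some x)" for k
  have "content T = L"
  proof (rule set_eqI)
    fix y
    show "y \<in> content T \<longleftrightarrow> y \<in> L"
    proof
      assume "y \<in> content T"
      then obtain k where k: "T k = Some y" unfolding content_def by blast
      show "y \<in> L"
      proof (cases "k < length xs")
        case True
        then have "y = xs ! k" using k unfolding T_def by simp
        then show ?thesis using True sx nth_mem by blast
      next
        case False
        then have "y = x" using k unfolding T_def by simp
        then show ?thesis using x by simp
      qed
    next
      assume "y \<in> L"
      then have "y \<in> set xs" using sx by simp
      then obtain k where "k < length xs" "xs ! k = y" by (auto simp: in_set_conv_nth)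
      then have "T k = Some y" unfolding T_def by simp
      then show "y \<in> content T" unfolding content_def by blast
    qed
  qed
  then show ?thesis by blast
qed

lemma learn_finite_index:
  assumes "TxtSdEx_learns g L" "finite L" "L \<noteq> {}"
  shows "W (the (g (set_encode L))) = L"
proof -
  obtain T where T: "content T = L" using text_exists[OF assms(2,3)] by blast
  have "Ex_conv (\<lambda>i. the (Sd g T i)) T" using assms(1) T unfolding TxtSdEx_learns_def by simp
  then obtain n0 where n0: "\<forall>n\<ge>n0. the (Sd g T n) = the (Sd g T n0) \<and> W (the (Sd g T n0)) = content T"
    unfolding Ex_conv_def by blast
  obtain N where N: "\<forall>n\<ge>N. content_prefix T n = L" using cp_eventually_all[OF assms(2) T] by blast
  let ?n = "max n0 N"
  have "content_prefix T ?n = L" using N max.cobounded2 by blast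
  then have "the (Sd g T ?n) = the (g (set_encode L))" unfolding Sd_def canon_eq by simp
  moreover have "the (Sd g T ?n) = the (Sd g T n0)" using n0 max.cobounded1 by blast
  moreover have "W (the (Sd g T n0)) = L" using n0 T by blast
  ultimately show ?thesis by simp
qed

definition cc :: "nat \<Rightarrow> nat \<Rightarrow> nat" where "cc p t = set_encode (Dk p t)"

lemma cc_rec: "cc p t = rec_nat (2 ^ pe p 0) (\<lambda>k r. r + 2 ^ pe p (Suc k)) t"
proof (induction t)
  case 0 then show ?case by (simp add: cc_def Dk_0)
next
  case (Suc t)
  have "cc p (Suc t) = 2 ^ pe p (Suc t) + cc p t"
    unfolding cc_def Dk_Suc by (rule set_encode_insert) (auto simp: pe_notin_Dk)
  then show ?case using Suc by simp
qed

lemma rt_cc2: "rt 2 (\<lambda>ys. cc (ys ! 0) (ys ! 1))"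
proof -
  have "rt 2 (\<lambda>ys. rec_nat (2 ^ pe (ys ! 0) 0) (\<lambda>i r. (\<lambda>a b c. b + 2 ^ pe (c ! 0) (Suc a)) i r ys) (ys ! 1))"
    by (rule rt_rec; intro rt_add rt_pow2 rt_pe rt_suc rt_proj rt_proj2 rt_const; simp)
  then show ?thesis by (rule rt_cong) (simp add: cc_rec)
qed

lemma rt_cc: "rt k A \<Longrightarrow> rt k B \<Longrightarrow> rt k (\<lambda>xs. cc (A xs) (B xs))"
  by (rule rt_app2[OF rt_cc2])

definition Pt :: "(nat \<Rightarrow> nat) \<Rightarrow> nat \<Rightarrow> nat \<Rightarrow> bool" where
  "Pt Fn p t \<longleftrightarrow> 1 \<le> t \<and> Fn (cc p (t - 1)) = Fn (cc p t)"

definition t1f :: "(nat \<Rightarrow> nat) \<Rightarrow> nat \<Rightarrow> nat \<Rightarrow> nat" where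
  "t1f Fn p n = bmin (Suc n) (Pt Fn p)"

definition outf :: "(nat \<Rightarrow> nat) \<Rightarrow> nat \<Rightarrow> nat \<Rightarrow> nat" where
  "outf Fn p n = (if t1f Fn p n \<le> n then
      (if n < 2 ^ Suc (pe p (t1f Fn p n - 1)) then gcode p (t1f Fn p n)
       else if n < 2 ^ Suc (pe p (t1f Fn p n)) then gcode p (Suc (t1f Fn p n)) else gcode p 0)
    else gcode p 0)"

definition bfun :: "(nat \<Rightarrow> nat) \<Rightarrow> nat \<Rightarrow> nat" where
  "bfun Fn z = outf Fn (pfst z) (psnd z)"

lemma rt_bfun:
  assumes rF: "rt 1 (\<lambda>ys. Fn (ys ! 0))"
  shows "rt 1 (\<lambda>ys. bfun Fn (ys ! 0))"
proof -
  have rFn: "rt k A \<Longrightarrow> rt k (\<lambda>xs. Fn (A xs))" for k A by (rule rt_app1[OF rF])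
  have t2: "rt 2 (\<lambda>ys. t1f Fn (ys ! 0) (ys ! 1))"
    unfolding t1f_def Pt_def
    by (rule rt_bmin[where P="\<lambda>t xs. 1 \<le> t \<and> Fn (cc (xs ! 0) (t - 1)) = Fn (cc (xs ! 0) t)"];
        intro rtp_and rtp_le rtp_eq rFn rt_cc rt_sub rt_suc rt_proj rt_proj1 rt_const; simp)
  have t: "rt k A \<Longrightarrow> rt k B \<Longrightarrow> rt k (\<lambda>xs. t1f Fn (A xs) (B xs))" for k A B
    by (rule rt_app2[OF t2])
  show ?thesis
    unfolding bfun_def outf_def
    by (intro rt_if rtp_le rtp_less t rt_gcode rt_pow2 rt_suc rt_pe rt_sub rt_pfst rt_psnd rt_proj rt_const; simp)
qed


lemma pow_gt: "x < (2::nat) ^ x"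
  by (rule less_exp)

lemma Dk_sub_Col: "Dk p k \<subseteq> Col p"
  unfolding Dk_def Col_def by auto

lemma pe_in_Dk: "j \<le> k \<Longrightarrow> pe p j \<in> Dk p k"
  unfolding Dk_def by simp

lemma Dk_bound: "\<forall>x\<in>Dk p k. x \<le> pe p k"
proof
  fix x assume "x \<in> Dk p k"
  then have "pfst x = p" "psnd x \<le> k" unfolding Dk_def by auto
  then have "x = pe p (psnd x)" using pe_pfst_psnd[of x] by simp
  then show "x \<le> pe p k" using pe_mono[OF \<open>psnd x \<le> k\<close>, of p] by simp
qed

lemma cc_ge: "t \<le> cc p t" and cc_ge2: "2 ^ pe p t \<le> cc p t" and cc_lt: "cc p t < 2 ^ Suc (pe p t)"
proof -
  show g2: "2 ^ pe p t \<le> cc p t" unfolding cc_def by (rule set_encode_ge) (auto intro: pe_in_Dk)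
  show "t \<le> cc p t" using g2 le_pe2[of t p] pow_gt[of "pe p t"] by linarith
  show "cc p t < 2 ^ Suc (pe p t)" unfolding cc_def by (rule set_encode_lt[OF finite_Dk Dk_bound])
qed

theorem theorem9:
  shows "\<exists>\<L>. TxtSdEx \<L> \<and> \<not> R_TxtSdEx \<L>"
proof (intro exI conjI)
  let ?L = "{L. TxtSdEx_learns hL L}"
  show "TxtSdEx ?L" unfolding TxtSdEx_def using hL_pc by blast
  show "\<not> R_TxtSdEx ?L"
  proof
    assume "R_TxtSdEx ?L"
    then obtain g where tc: "total_computable g" and lr: "\<forall>L\<in>?L. TxtSdEx_learns g L"
      unfolding R_TxtSdEx_def by blast
    from tc obtain f0 where f0: "\<forall>x y. g x = Some y \<longleftrightarrow> eval f0 [x] y" and tot: "\<forall>x. g x \<noteq> None"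
      unfolding total_computable_def partial_computable_def by blast
    define Fn where "Fn x = the (g x)" for x
    have gF: "g x = Some (Fn x)" for x using tot unfolding Fn_def by auto
    have rF: "rt 1 (\<lambda>ys. Fn (ys ! 0))"
      unfolding rt_def
    proof (intro exI allI impI)
      fix xs :: "nat list" assume "length xs = 1"
      then obtain x where xs: "xs = [x]" by (auto simp: length_Suc_conv)
      have "g x = Some (Fn x)" by (rule gF)
      then show "eval f0 xs (Fn (xs ! 0))" unfolding xs using f0 by simp
    qed
    define Bt where "Bt = trm 1 (\<lambda>ys. bfun Fn (ys ! 0))"
    define p where "p = code Bt"
    have evB: "eval Bt [z] (bfun Fn z)" for z
      unfolding Bt_def using trm_eval[OF rt_bfun[OF rF], of "[z]"] by simp
    have hcol: "hL (set_encode D) = Some (outf Fn p (set_encode D))"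
      if "finite D" "D \<noteq> {}" "D \<subseteq> Col p" for D
    proof -
      have "\<forall>x\<in>D. pfst x = code Bt" using that(3) unfolding Col_def p_def by auto
      moreover have "eval Bt [pe (code Bt) (set_encode D)] (outf Fn p (set_encode D))"
        using evB[of "pe (code Bt) (set_encode D)"] unfolding bfun_def p_def by simp
      ultimately show ?thesis using hL_col[OF that(1,2)] by blast
    qed
    have learn: "L \<in> ?L"
      if L: "L \<subseteq> Col p" "L \<noteq> {}" "W e = L"
        and ev: "\<forall>T. content T = L \<longrightarrow> (\<exists>N. \<forall>n\<ge>N. outf Fn p (set_encode (content_prefix T n)) = e)"
      for L e
    proof -
      have "TxtSdEx_learns hL L"
        unfolding TxtSdEx_learns_def
      proof (intro allI impI)
        fix T assume T: "content T = L"
        have Sd_eq: "Sd hL T i = (if content_prefix T i = {} then Some 0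
              else Some (outf Fn p (set_encode (content_prefix T i))))" for i
        proof (cases "content_prefix T i = {}")
          case True then show ?thesis unfolding Sd_def canon_eq using hL_0 by simp
        next
          case False
          have "content_prefix T i \<subseteq> Col p" using cp_sub[of T i] T L(1) by blast
          then show ?thesis unfolding Sd_def canon_eq using hcol[OF cp_finite False] False by simp
        qed
        have A: "\<forall>i. Sd hL T i \<noteq> None" using Sd_eq by simp
        obtain N1 where N1: "\<forall>n\<ge>N1. outf Fn p (set_encode (content_prefix T n)) = e" using ev T by blast
        obtain N2 where N2: "\<forall>n\<ge>N2. content_prefix T n \<noteq> {}" using cp_eventually_ne T L(2) by blast
        have all: "the (Sd hL T n) = e" if "n \<ge> max N1 N2" for n
          using that N1 N2 Sd_eq[of n] by simp
        have B: "Ex_conv (\<lambda>i. the (Sd hL T i)) T"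
          unfolding Ex_conv_def
          by (rule exI[of _ "max N1 N2"]) (use all L(3) T in simp)
        show "(\<forall>i. Sd hL T i \<noteq> None) \<and> Ex_conv (\<lambda>i. the (Sd hL T i)) T" using A B by blast
      qed
      then show ?thesis by simp
    qed
    show False
    proof (cases "\<exists>t. Pt Fn p t")
      case True
      define t1 where "t1 = (LEAST t. Pt Fn p t)"
      have P1: "Pt Fn p t1" unfolding t1_def using True by (rule LeastI_ex)
      then have t1: "1 \<le> t1" and FF: "Fn (cc p (t1 - 1)) = Fn (cc p t1)" unfolding Pt_def by auto
      have tf: "t1f Fn p n = t1" if "t1 \<le> n" for n
        unfolding t1f_def
      proof (rule bmin_eq)
        show "Pt Fn p t1" by (rule P1)
        show "t1 < Suc n" using that by simp
        show "\<forall>i<t1. \<not> Pt Fn p i" unfolding t1_def using not_less_Least by blast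
      qed
      define n1 where "n1 = cc p (t1 - 1)"
      define n2 where "n2 = cc p t1"
      have n1ge: "t1 \<le> n1"
      proof -
        have "t1 - 1 \<le> pe p (t1 - 1)" by (rule le_pe2)
        moreover have "pe p (t1 - 1) < 2 ^ pe p (t1 - 1)" by (rule pow_gt)
        ultimately show ?thesis using cc_ge2[of p "t1 - 1"] t1 unfolding n1_def by linarith
      qed
      have out1: "outf Fn p n1 = gcode p t1"
        unfolding outf_def tf[OF n1ge] using n1ge cc_lt[of p "t1 - 1"] unfolding n1_def by simp
      have n2ge: "t1 \<le> n2" unfolding n2_def by (rule cc_ge)
      have sm: "Suc (pe p (t1 - 1)) \<le> pe p t1" using pe_smono[of "t1 - 1" t1 p] t1 by simp
      have "(2::nat) ^ Suc (pe p (t1 - 1)) \<le> 2 ^ pe p t1" by (rule power_increasing[OF sm]) simp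
      then have n2big: "\<not> n2 < 2 ^ Suc (pe p (t1 - 1))" using cc_ge2[of p t1] unfolding n2_def by linarith
      have out2: "outf Fn p n2 = gcode p (Suc t1)"
        unfolding outf_def tf[OF n2ge] using n2ge n2big cc_lt[of p t1] unfolding n2_def by simp
      have Dne: "Dk p k \<noteq> {}" for k using pe_in_Dk[of 0 k p] by blast
      have A1: "Dk p (t1 - 1) \<in> ?L"
      proof (rule learn[OF Dk_sub_Col Dne])
        show "W (gcode p t1) = Dk p (t1 - 1)" using W_gcodeS[of p "t1 - 1"] t1 by simp
        show "\<forall>T. content T = Dk p (t1 - 1) \<longrightarrow> (\<exists>N. \<forall>n\<ge>N. outf Fn p (set_encode (content_prefix T n)) = gcode p t1)"
        proof (intro allI impI)
          fix T assume "content T = Dk p (t1 - 1)"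
          then obtain N where N: "\<forall>n\<ge>N. content_prefix T n = Dk p (t1 - 1)"
            using cp_eventually_all[OF finite_Dk] by blast
          have "outf Fn p (set_encode (content_prefix T n)) = gcode p t1" if "n \<ge> N" for n
            using N that out1 unfolding n1_def cc_def by simp
          then show "\<exists>N. \<forall>n\<ge>N. outf Fn p (set_encode (content_prefix T n)) = gcode p t1" by blast
        qed
      qed
      have A2: "Dk p t1 \<in> ?L"
      proof (rule learn[OF Dk_sub_Col Dne])
        show "W (gcode p (Suc t1)) = Dk p t1" by (rule W_gcodeS)
        show "\<forall>T. content T = Dk p t1 \<longrightarrow> (\<exists>N. \<forall>n\<ge>N. outf Fn p (set_encode (content_prefix T n)) = gcode p (Suc t1))"
        proof (intro allI impI)
          fix T assume "content T = Dk p t1"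
          then obtain N where N: "\<forall>n\<ge>N. content_prefix T n = Dk p t1"
            using cp_eventually_all[OF finite_Dk] by blast
          have "outf Fn p (set_encode (content_prefix T n)) = gcode p (Suc t1)" if "n \<ge> N" for n
            using N that out2 unfolding n2_def cc_def by simp
          then show "\<exists>N. \<forall>n\<ge>N. outf Fn p (set_encode (content_prefix T n)) = gcode p (Suc t1)" by blast
        qed
      qed
      have l1: "TxtSdEx_learns g (Dk p (t1 - 1))" by (rule bspec[OF lr A1])
      have l2: "TxtSdEx_learns g (Dk p t1)" by (rule bspec[OF lr A2])
      have w1: "W (the (g (set_encode (Dk p (t1 - 1))))) = Dk p (t1 - 1)"
        by (rule learn_finite_index[OF l1 finite_Dk Dne])
      have w2: "W (the (g (set_encode (Dk p t1)))) = Dk p t1"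
        by (rule learn_finite_index[OF l2 finite_Dk Dne])
      have e1: "the (g (set_encode (Dk p (t1 - 1)))) = Fn n1" unfolding Fn_def n1_def cc_def ..
      have e2: "the (g (set_encode (Dk p t1))) = Fn n2" unfolding Fn_def n2_def cc_def ..
      have "Fn n1 = Fn n2" using FF unfolding n1_def n2_def .
      then have "Dk p (t1 - 1) = Dk p t1" using w1 w2 e1 e2 by metis
      moreover have "pe p t1 \<in> Dk p t1" by (rule pe_in_Dk) simp
      moreover have "pe p t1 \<notin> Dk p (t1 - 1)" using t1 unfolding Dk_def by simp
      ultimately show False by blast
    next
      case False
      have out: "outf Fn p n = gcode p 0" for n
      proof -
        have "t1f Fn p n = Suc n" unfolding t1f_def by (rule bmin_none) (use False in blast)
        then show ?thesis unfolding outf_def by simp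
      qed
      have colL: "Col p \<in> ?L"
      proof (rule learn)
        show "Col p \<subseteq> Col p" by simp
        have "pe p 0 \<in> Col p" unfolding Col_def by simp
        then show "Col p \<noteq> {}" by blast
        show "W (gcode p 0) = Col p" by (rule W_gcode0)
        show "\<forall>T. content T = Col p \<longrightarrow> (\<exists>N. \<forall>n\<ge>N. outf Fn p (set_encode (content_prefix T n)) = gcode p 0)"
          using out by simp
      qed
      define T where "T k = Some (pe p k)" for k
      have cT: "content T = Col p"
      proof (rule set_eqI)
        fix x show "x \<in> content T \<longleftrightarrow> x \<in> Col p"
        proof
          assume "x \<in> content T"
          then obtain k where "Some (pe p k) = Some x" unfolding content_def T_def by blast
          then show "x \<in> Col p" unfolding Col_def by auto
        next
          assume "x \<in> Col p"
          then have "T (psnd x) = Some x" unfolding T_def Col_def using pe_pfst_psnd[of x] by simp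
          then show "x \<in> content T" unfolding content_def by blast
        qed
      qed
      have cpT: "content_prefix T (Suc k) = Dk p k" for k
      proof -
        have "content_prefix T (Suc k) = (\<lambda>j. pe p j) ` {..k}"
          unfolding content_prefix_def T_def by (auto simp: less_Suc_eq_le)
        then show ?thesis using Dk_img by simp
      qed
      have "TxtSdEx_learns g (Col p)" using lr colL by blast
      then have "Ex_conv (\<lambda>i. the (Sd g T i)) T" using cT unfolding TxtSdEx_learns_def by simp
      then obtain n0 where n0: "\<forall>n\<ge>n0. the (Sd g T n) = the (Sd g T n0)"
        unfolding Ex_conv_def by blast
      have sd: "the (Sd g T (Suc k)) = Fn (cc p k)" for k
        unfolding Sd_def canon_eq cpT cc_def Fn_def by simp
      have "the (Sd g T (Suc n0)) = the (Sd g T (Suc (Suc n0)))"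
        using n0[rule_format, of "Suc n0"] n0[rule_format, of "Suc (Suc n0)"] by simp
      then have "Fn (cc p n0) = Fn (cc p (Suc n0))" unfolding sd .
      then have "Pt Fn p (Suc n0)" unfolding Pt_def by simp
      then show False using False by blast
    qed
  qed
qed

end
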